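(* Let $0\le r\le n$ be integers with $r\neq n-1$, and let $k=\min(r+1,n)$. Then, as $p$ tends to infinity through the primes, $$\lim_{p\to\infty}p^{\binom{k}{2}}\beta^*(n,r;p)=\frac{1}{r!}.$$
   Context: Fix a prime $p$ and let $\mathbb{Z}_p,\mathbb{Q}_p$ be the $p$-adic integers and numbers. A random monic polynomial of degree $n$ reducing to $x^n$ mod $p$ is $f=x^n+a_{n-1}x^{n-1}+\dots+a_0$ with $(a_0,\dots,a_{n-1})$ Haar-distributed on $(p\mathbb{Z}_p)^n$ normalized to total mass $1$. For such $f$ let $X(f)$ be the number of distinct roots of $f$ in $\mathbb{Q}_p$, and define $\beta^*(n,r;p)=\Pr(X=r)$. *)

theory Defs
  imports "HOL-Probability.Probability"
begin

text \<open>p-adic integers are modelled by their base-p digit sequences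
  d :: nat \<Rightarrow> nat with d i < p (bijection with Z_p).  Normalized Haar measure
  on Z_p is the product of uniform measures on the digits {0..<p}; on pZ_p
  it is the same with the 0-th digit forced to be 0.\<close>

definition digit_measure :: "nat \<Rightarrow> nat measure" where
  "digit_measure p = measure_pmf (pmf_of_set {..<p})"

definition pZp_haar :: "nat \<Rightarrow> (nat \<Rightarrow> nat) measure" where
  "pZp_haar p = PiM UNIV (\<lambda>j. if j = 0 then return (count_space UNIV) 0 else digit_measure p)"

definition zp_trunc :: "nat \<Rightarrow> (nat \<Rightarrow> nat) \<Rightarrow> nat \<Rightarrow> int" where
  "zp_trunc p d k = (\<Sum>i<k. int (d i) * int p ^ i)"

definition is_zp_root :: "nat \<Rightarrow> nat \<Rightarrow> (nat \<Rightarrow> nat \<Rightarrow> nat) \<Rightarrow> (nat \<Rightarrow> nat) \<Rightarrow> bool" where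
  "is_zp_root p n a x \<longleftrightarrow> (\<forall>i. x i < p) \<and>
     (\<forall>k. int p ^ k dvd
            (\<Sum>i<n. zp_trunc p (a i) k * zp_trunc p x k ^ i) + zp_trunc p x k ^ n)"

text \<open>Number of distinct roots (all roots in Q_p of such f lie in Z_p).\<close>
definition num_roots :: "nat \<Rightarrow> nat \<Rightarrow> (nat \<Rightarrow> nat \<Rightarrow> nat) \<Rightarrow> nat" where
  "num_roots p n a = card {x. is_zp_root p n a x}"

definition coeff_measure :: "nat \<Rightarrow> nat \<Rightarrow> (nat \<Rightarrow> nat \<Rightarrow> nat) measure" where
  "coeff_measure p n = PiM {..<n} (\<lambda>_. pZp_haar p)"

definition beta_star :: "nat \<Rightarrow> nat \<Rightarrow> nat \<Rightarrow> real" where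
  "beta_star n r p = measure (coeff_measure p n)
      {a \<in> space (coeff_measure p n). num_roots p n a = r}"

end

theory Submission
  imports Defs "HOL-Computational_Algebra.Polynomial" "HOL-Computational_Algebra.Primes"
begin

lemma zp_trunc_0[simp]: "zp_trunc p d 0 = 0"
  by (simp add: zp_trunc_def)

lemma zp_trunc_Suc: "zp_trunc p d (Suc k) = zp_trunc p d k + int (d k) * int p ^ k"
  by (simp add: zp_trunc_def)

lemma zp_trunc_nonneg: "0 \<le> zp_trunc p d k"
  by (induct k) (auto simp: zp_trunc_Suc)

lemma zp_trunc_less': "(\<And>i. i < k \<Longrightarrow> d i < p) \<Longrightarrow> zp_trunc p d k < int p ^ k"
proof (induct k)
  case 0 then show ?case by simp
next
  case (Suc k)
  have "int (d k) \<le> int p - 1" using Suc.prems[of k] by simp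
  then have "int (d k) * int p ^ k \<le> (int p - 1) * int p ^ k" by (intro mult_right_mono) auto
  then show ?case using Suc by (simp add: zp_trunc_Suc algebra_simps)
qed

lemma zp_trunc_less: "\<forall>i. d i < p \<Longrightarrow> zp_trunc p d k < int p ^ k"
  by (rule zp_trunc_less') auto

lemma zp_trunc_dvd_diff:
  assumes "k \<le> k'"
  shows "int p ^ k dvd zp_trunc p d k' - zp_trunc p d k"
  using assms
proof (induct k' rule: dec_induct)
  case base then show ?case by simp
next
  case (step m)
  have "int p ^ k dvd int (d m) * int p ^ m" using step(1) by (simp add: le_imp_power_dvd)
  then show ?case using step(3) by (simp add: zp_trunc_Suc) (metis add_diff_eq dvd_add add.commute)
qed

lemma zp_trunc_mod:
  assumes "\<forall>i. d i < p" "k \<le> k'"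
  shows "zp_trunc p d k' mod int p ^ k = zp_trunc p d k"
proof -
  have "zp_trunc p d k' mod int p ^ k = zp_trunc p d k mod int p ^ k"
    using zp_trunc_dvd_diff[OF assms(2), of p d] by (simp add: mod_eq_dvd_iff)
  also have "\<dots> = zp_trunc p d k"
    using zp_trunc_nonneg zp_trunc_less[OF assms(1)] by (simp add: mod_pos_pos_trivial)
  finally show ?thesis .
qed

lemma zp_trunc_cong:
  "(\<And>i. i < k \<Longrightarrow> d i = d' i) \<Longrightarrow> zp_trunc p d k = zp_trunc p d' k"
  by (simp add: zp_trunc_def)

lemma zp_trunc_digit:
  assumes "\<And>i. i < L \<Longrightarrow> d i < p" "i < L"
  shows "(zp_trunc p d L div int p ^ i) mod int p = int (d i)"
  using assms
proof (induct L arbitrary: i)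
  case 0 then show ?case by simp
next
  case (Suc L)
  have p0: "p > 0" using Suc.prems(1)[of 0] by simp
  show ?case
  proof (cases "i < L")
    case True
    have pw: "int p ^ L = int p ^ i * (int p ^ (L - i - 1) * int p)"
    proof -
      have "L = i + Suc (L - i - 1)" using True by simp
      then have "int p ^ L = int p ^ i * int p ^ Suc (L - i - 1)" by (metis power_add)
      then show ?thesis by (simp add: mult.commute)
    qed
    have "zp_trunc p d (Suc L) = zp_trunc p d L + (int (d L) * (int p ^ (L - i - 1) * int p)) * int p ^ i"
      by (simp add: zp_trunc_Suc pw algebra_simps)
    then have "zp_trunc p d (Suc L) div int p ^ i = zp_trunc p d L div int p ^ i + int (d L) * int p ^ (L - i - 1) * int p"
      using p0 by (simp only: div_mult_self1 power_not_zero) simp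
    then show ?thesis using Suc.hyps[of i] Suc.prems True by simp
  next
    case False
    then have iL: "i = L" using Suc.prems by simp
    have "zp_trunc p d L div int p ^ L = 0"
      using zp_trunc_nonneg zp_trunc_less'[of L d p] Suc.prems(1) by (simp add: div_pos_pos_trivial)
    then have "zp_trunc p d (Suc L) div int p ^ L = int (d L)"
      using p0 by (simp add: zp_trunc_Suc)
    then show ?thesis using iL Suc.prems(1)[of L] by simp
  qed
qed

definition fK :: "nat \<Rightarrow> nat \<Rightarrow> (nat \<Rightarrow> nat \<Rightarrow> nat) \<Rightarrow> nat \<Rightarrow> int poly" where
  "fK p n a K = (\<Sum>i<n. monom (zp_trunc p (a i) K) i) + monom 1 n"

lemma coeff_fK: "coeff (fK p n a K) j = (if j < n then zp_trunc p (a j) K else if j = n then 1 else 0)"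
  by (auto simp: fK_def coeff_sum coeff_monom)

lemma poly_fK: "poly (fK p n a K) t = (\<Sum>i<n. zp_trunc p (a i) K * t ^ i) + t ^ n"
  by (simp add: fK_def poly_sum poly_monom)

lemma is_zp_root_fK: "is_zp_root p n a x \<longleftrightarrow> (\<forall>i. x i < p) \<and>
   (\<forall>k. int p ^ k dvd poly (fK p n a k) (zp_trunc p x k))"
  by (simp add: is_zp_root_def poly_fK)

lemma fK_cong: "k \<le> K \<Longrightarrow> [:int p ^ k:] dvd fK p n a K - fK p n a k"
  by (auto simp: const_poly_dvd_iff coeff_fK zp_trunc_dvd_diff)

lemma poly_diff_dvd: "(u - v) dvd poly P u - poly P (v::int)"
proof (induct P)
  case 0 then show ?case by simp
next
  case (pCons c P)
  have "poly (pCons c P) u - poly (pCons c P) v = (u - v) * poly P u + v * (poly P u - poly P v)"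
    by (simp add: algebra_simps)
  then show ?case using pCons(2) by simp
qed

lemma pcong_eval:
  fixes P Q :: "int poly"
  assumes "[:m:] dvd P - Q" "m dvd u - v"
  shows "m dvd poly P u - poly Q v"
proof -
  obtain R where "P - Q = [:m:] * R" using assms(1) by (auto simp: dvd_def)
  then have "m dvd poly (P - Q) u" by simp
  moreover have "m dvd poly Q u - poly Q v" using assms(2) poly_diff_dvd dvd_trans by blast
  ultimately have "m dvd poly (P - Q) u + (poly Q u - poly Q v)" by (rule dvd_add)
  then show ?thesis by simp
qed

lemma pcong_pcompose: "[:m:] dvd (P::int poly) \<Longrightarrow> [:m:] dvd pcompose P q"
  by (metis dvd_def pcompose_mult pcompose_const)

lemma pcong_pderiv: "[:m:] dvd (P::int poly) \<Longrightarrow> [:m:] dvd pderiv P"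
  by (auto simp: const_poly_dvd_iff coeff_pderiv)

lemma coeff_pcompose_scale: "coeff (pcompose (P::int poly) [:0, c:]) j = coeff P j * c ^ j"
proof (induct P arbitrary: j)
  case 0 then show ?case by simp
next
  case (pCons a P)
  show ?case by (cases j) (simp_all add: pcompose_pCons coeff_pCons pCons.hyps mult_ac)
qed

lemma taylor_dvd: "h^2 dvd poly P (u + h) - poly P u - h * poly (pderiv P) (u::int)"
proof (induct P)
  case 0 then show ?case by simp
next
  case (pCons c P)
  obtain e where e: "poly P (u + h) - poly P u - h * poly (pderiv P) u = h^2 * e"
    using pCons(2) by (auto simp: dvd_def)
  have "poly (pCons c P) (u + h) - poly (pCons c P) u - h * poly (pderiv (pCons c P)) u
      = (u + h) * (poly P (u + h) - poly P u - h * poly (pderiv P) u) + h^2 * poly (pderiv P) u"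
    by (simp add: pderiv_pCons algebra_simps power2_eq_square)
  also have "\<dots> = h^2 * ((u + h) * e + poly (pderiv P) u)" unfolding e by (simp add: algebra_simps)
  finally show ?case by simp
qed

lemma prime_power_dvd_cancel:
  fixes p :: int
  assumes "prime p"
  shows "\<not> p ^ D dvd u \<Longrightarrow> p ^ N dvd u * w \<Longrightarrow> p ^ (N - D) dvd w"
proof (induct D arbitrary: u N)
  case 0 then show ?case by simp
next
  case (Suc D)
  show ?case
  proof (cases "p dvd u")
    case True
    then obtain u' where u: "u = p * u'" by (auto simp: dvd_def)
    have nd: "\<not> p ^ D dvd u'" using Suc.prems(1) u by (auto simp: mult_dvd_mono)
    show ?thesis
    proof (cases N)
      case 0 then show ?thesis by simp
    next
      case (Suc N')
      have "p ^ N' dvd u' * w" using Suc.prems(2) u \<open>N = Suc N'\<close> assms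
        by (simp add: mult.assoc)
      then have "p ^ (N' - D) dvd w" using Suc.hyps nd by blast
      then show ?thesis using \<open>N = Suc N'\<close> by simp
    qed
  next
    case False
    then have "coprime (p ^ N) u" using assms by (simp add: prime_imp_coprime coprime_commute)
    then have "p ^ N dvd w" using Suc.prems(2) by (simp add: coprime_dvd_mult_right_iff)
    then show ?thesis by (meson diff_le_self dvd_trans le_imp_power_dvd)
  qed
qed

definition hroot :: "nat \<Rightarrow> (nat \<Rightarrow> int poly) \<Rightarrow> (nat \<Rightarrow> nat) \<Rightarrow> bool" where
  "hroot p H y \<longleftrightarrow> (\<forall>i. y i < p) \<and> (\<forall>m. int p ^ m dvd poly (H m) (zp_trunc p y m))"

lemma zp_trunc_1: "zp_trunc p y 1 = int (y 0)"
  by (simp add: zp_trunc_def)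

lemma zp_trunc_Suc0[simp]: "zp_trunc p y (Suc 0) = int (y 0)"
  by (simp add: zp_trunc_def)

lemma dvd_diff_cancel: "m dvd a \<Longrightarrow> m dvd a - b \<Longrightarrow> m dvd (b::int)"
  using dvd_diff[of m a "a - b"] by simp

lemma dvd_small_eq:
  fixes u v :: int
  assumes "0 \<le> u" "u < P" "0 \<le> v" "v < P" "P dvd u - v"
  shows "u = v"
proof -
  obtain c where c: "u - v = P * c" using assms(5) by (auto simp: dvd_def)
  have "c = 0"
  proof (rule ccontr)
    assume "c \<noteq> 0"
    then have "\<bar>P * c\<bar> \<ge> P" using assms by (auto simp: abs_mult)
    then show False using c assms by auto
  qed
  then show ?thesis using c by simp
qed

lemma pderiv_prod_root:
  fixes B :: "int set"
  assumes "finite B" "b \<in> B"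
  shows "poly (pderiv (\<Prod>c\<in>B. [:-c,1:])) b = (\<Prod>c\<in>B-{b}. b - c)"
proof -
  have "(\<Prod>c\<in>B. [:-c,1:]) = [:-b,1:] * (\<Prod>c\<in>B-{b}. [:-c,1:])"
    using assms by (simp add: prod.remove)
  moreover have "poly (pderiv ([:-b,1:] * Q)) b = poly Q b" for Q :: "int poly"
  proof -
    have "pderiv [:-b,1:] = 1" by (simp add: pderiv_pCons)
    moreover have "poly [:-b,1:] b = 0" by simp
    ultimately show ?thesis by (simp only: pderiv_mult poly_add poly_mult) simp
  qed
  ultimately show ?thesis by (simp add: poly_prod)
qed

definition hstep :: "nat \<Rightarrow> (nat \<Rightarrow> int poly) \<Rightarrow> nat \<Rightarrow> int \<Rightarrow> int" where
  "hstep p H m Y = (SOME d. 0 \<le> d \<and> d < int p \<and> int p ^ Suc m dvd poly (H (Suc m)) (Y + int p ^ m * d))"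

primrec Yseq :: "nat \<Rightarrow> (nat \<Rightarrow> int poly) \<Rightarrow> int \<Rightarrow> nat \<Rightarrow> int" where
  "Yseq p H b 0 = 0"
| "Yseq p H b (Suc m) = (if m = 0 then b else Yseq p H b m + int p ^ m * hstep p H m (Yseq p H b m))"

definition ydig :: "nat \<Rightarrow> (nat \<Rightarrow> int poly) \<Rightarrow> int \<Rightarrow> nat \<Rightarrow> nat" where
  "ydig p H b i = nat ((Yseq p H b (Suc i) - Yseq p H b i) div int p ^ i)"

context
  fixes p :: nat and H :: "nat \<Rightarrow> int poly" and F :: "int poly" and \<gamma> :: int and B :: "int set"
  assumes pp: "prime p"
    and hc: "\<And>m m'. m \<le> m' \<Longrightarrow> [:int p ^ m:] dvd H m' - H m"
    and hF: "\<And>m. m \<ge> 1 \<Longrightarrow> [:int p:] dvd H m - F"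
    and Fdef: "F = smult \<gamma> (\<Prod>b\<in>B. [:-b,1:])"
    and Bsub: "B \<subseteq> {0..<int p}"
    and gam: "\<not> int p dvd \<gamma>"
begin

lemma finB: "finite B" using Bsub finite_subset by blast

lemma ppi: "prime (int p)" using pp by simp

lemma p_pos: "p > 0" using pp prime_gt_0_nat by blast

lemma F_deriv_unit: "b \<in> B \<Longrightarrow> \<not> int p dvd poly (pderiv F) b"
proof
  assume b: "b \<in> B" and d: "int p dvd poly (pderiv F) b"
  have "poly (pderiv F) b = \<gamma> * (\<Prod>c\<in>B-{b}. b - c)"
    using pderiv_prod_root[OF finB b] by (simp add: Fdef pderiv_smult)
  with d gam ppi obtain c where c: "c \<in> B - {b}" "int p dvd b - c"
    by (auto simp: prime_dvd_mult_iff prime_dvd_prod_iff finB)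
  then have "b = c" using b Bsub by (intro dvd_small_eq[of _ "int p"]) auto
  then show False using c by simp
qed

lemma hroot_0: "hroot p H y \<Longrightarrow> int (y 0) \<in> B"
proof -
  assume r: "hroot p H y"
  then have "int p ^ 1 dvd poly (H 1) (zp_trunc p y 1)" unfolding hroot_def by blast
  then have "int p dvd poly (H 1) (int (y 0))" by (simp add: zp_trunc_1)
  moreover have "int p dvd poly (H 1) (int (y 0)) - poly F (int (y 0))"
    using hF[of 1] by (intro pcong_eval) auto
  ultimately have "int p dvd poly F (int (y 0))" by (rule dvd_diff_cancel)
  then have "int p dvd (\<Prod>c\<in>B. int (y 0) - c)" using gam ppi
    by (simp add: Fdef poly_prod prime_dvd_mult_iff)
  then obtain c where c: "c \<in> B" "int p dvd int (y 0) - c" using ppi finB by (auto simp: prime_dvd_prod_iff)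
  moreover have "int (y 0) < int p" using r by (simp add: hroot_def)
  ultimately have "int (y 0) = c" using Bsub by (intro dvd_small_eq[of _ "int p"]) auto
  then show ?thesis using c by simp
qed

lemma hroot_deriv:
  assumes "hroot p H y" "m \<ge> 1" "m' \<ge> 1"
  shows "\<not> int p dvd poly (pderiv (H m)) (zp_trunc p y m')"
proof
  assume d: "int p dvd poly (pderiv (H m)) (zp_trunc p y m')"
  have b: "int (y 0) \<in> B" using hroot_0[OF assms(1)] .
  have "int p dvd poly (pderiv (H m)) (zp_trunc p y m') - poly (pderiv F) (int (y 0))"
  proof (intro pcong_eval)
    show "[:int p:] dvd pderiv (H m) - pderiv F" using pcong_pderiv[OF hF[OF assms(2)]] by (simp add: pderiv_diff)
    show "int p dvd zp_trunc p y m' - int (y 0)"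
      using zp_trunc_dvd_diff[of 1 m' p y] assms(3) by (simp add: zp_trunc_1)
  qed
  with d have "int p dvd poly (pderiv F) (int (y 0))" by (rule dvd_diff_cancel)
  then show False using F_deriv_unit[OF b] by simp
qed

lemma hroot_unique_trunc:
  assumes y: "hroot p H y" and y': "hroot p H y'" and e0: "y 0 = y' 0" and m: "m \<ge> 1"
  shows "zp_trunc p y m = zp_trunc p y' m"
  using m
proof (induct m rule: dec_induct)
  case base then show ?case using e0 by simp
next
  case (step m)
  let ?P = "int p"
  define Y where "Y = zp_trunc p y (Suc m)"
  define h where "h = ?P ^ m * (int (y' m) - int (y m))"
  have Y': "zp_trunc p y' (Suc m) = Y + h"
    by (simp add: Y_def h_def zp_trunc_Suc step(3) algebra_simps)
  have t: "h^2 dvd poly (H (Suc m)) (Y + h) - poly (H (Suc m)) Y - h * poly (pderiv (H (Suc m))) Y"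
    by (rule taylor_dvd)
  have "?P ^ (Suc m) dvd h^2"
  proof -
    have "?P ^ (Suc m) dvd ?P ^ (2 * m)" using step(1) by (intro le_imp_power_dvd) simp
    also have "?P ^ (2*m) dvd h^2" by (simp add: h_def power_mult_distrib power_mult[symmetric] mult.commute)
    finally show ?thesis .
  qed
  with t have t2: "?P ^ (Suc m) dvd poly (H (Suc m)) (Y + h) - poly (H (Suc m)) Y - h * poly (pderiv (H (Suc m))) Y"
    using dvd_trans by blast
  have r1: "?P ^ Suc m dvd poly (H (Suc m)) Y" using y unfolding hroot_def Y_def by blast
  have r2: "?P ^ Suc m dvd poly (H (Suc m)) (Y + h)" using y' unfolding hroot_def Y' [symmetric] by blast
  have "?P ^ Suc m dvd h * poly (pderiv (H (Suc m))) Y"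
  proof -
    have "?P ^ Suc m dvd (poly (H (Suc m)) (Y + h) - poly (H (Suc m)) Y) - (poly (H (Suc m)) (Y + h) - poly (H (Suc m)) Y - h * poly (pderiv (H (Suc m))) Y)"
      using dvd_diff[OF dvd_diff[OF r2 r1] t2] .
    then show ?thesis by simp
  qed
  then have "?P ^ m * ?P dvd ?P ^ m * ((int (y' m) - int (y m)) * poly (pderiv (H (Suc m))) Y)"
    by (simp add: h_def mult.assoc mult.commute)
  then have "?P dvd (int (y' m) - int (y m)) * poly (pderiv (H (Suc m))) Y"
    using p_pos by (subst (asm) dvd_mult_cancel_left) auto
  moreover have "\<not> ?P dvd poly (pderiv (H (Suc m))) Y"
    unfolding Y_def by (rule hroot_deriv[OF y]) auto
  ultimately have "?P dvd int (y' m) - int (y m)" using ppi by (auto simp: prime_dvd_mult_iff)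
  then have "int (y' m) = int (y m)"
    using y y' unfolding hroot_def by (intro dvd_small_eq[of _ ?P]) auto
  then show ?case using step(3) by (simp add: zp_trunc_Suc)
qed

lemma hroot_unique:
  assumes y: "hroot p H y" and y': "hroot p H y'" and e0: "y 0 = y' 0"
  shows "y = y'"
proof
  fix i
  have "zp_trunc p y (Suc i) = zp_trunc p y' (Suc i)" by (rule hroot_unique_trunc[OF y y' e0]) simp
  moreover have "(zp_trunc p y (Suc i) div int p ^ i) mod int p = int (y i)"
    using y unfolding hroot_def by (intro zp_trunc_digit) auto
  moreover have "(zp_trunc p y' (Suc i) div int p ^ i) mod int p = int (y' i)"
    using y' unfolding hroot_def by (intro zp_trunc_digit) auto
  ultimately show "y i = y' i" by simp
qed

lemma deriv_unit_at:
  assumes "m \<ge> 1" "b \<in> B" "int p dvd Y - b"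
  shows "\<not> int p dvd poly (pderiv (H m)) Y"
proof
  assume d: "int p dvd poly (pderiv (H m)) Y"
  have "int p dvd poly (pderiv (H m)) Y - poly (pderiv F) b"
  proof (intro pcong_eval)
    show "[:int p:] dvd pderiv (H m) - pderiv F" using pcong_pderiv[OF hF[OF assms(1)]] by (simp add: pderiv_diff)
  qed (rule assms(3))
  with d have "int p dvd poly (pderiv F) b" by (rule dvd_diff_cancel)
  then show False using F_deriv_unit[OF assms(2)] by simp
qed

lemma step_exists:
  assumes m: "m \<ge> 1" and b: "b \<in> B" and Yb: "int p dvd Y - b" and HY: "int p ^ m dvd poly (H m) Y"
  shows "\<exists>d. 0 \<le> d \<and> d < int p \<and> int p ^ Suc m dvd poly (H (Suc m)) (Y + int p ^ m * d)"
proof -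
  let ?P = "int p"
  have "?P ^ m dvd poly (H (Suc m)) Y - poly (H m) Y"
    using hc[of m "Suc m"] by (intro pcong_eval) auto
  then have "?P ^ m dvd poly (H (Suc m)) Y" using dvd_add[OF _ HY] by fastforce
  then obtain s where s: "poly (H (Suc m)) Y = ?P ^ m * s" by (auto simp: dvd_def)
  define u where "u = poly (pderiv (H (Suc m))) Y"
  have nu: "\<not> ?P dvd u" unfolding u_def using deriv_unit_at[of "Suc m" b Y] b Yb by simp
  have "coprime u ?P" using prime_imp_coprime[OF ppi nu] by (simp add: coprime_commute)
  then have "gcd u ?P = 1" by simp
  then obtain x v where xv: "x * u + v * ?P = 1" using bezout_int[of u ?P] by auto
  define d where "d = (- s * x) mod ?P"
  have d0: "0 \<le> d" "d < ?P" using p_pos by (auto simp: d_def)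
  have "d mod ?P = (- s * x) mod ?P" by (simp add: d_def)
  then have "?P dvd d - (- s * x)" by (simp only: mod_eq_dvd_iff)
  then obtain w where w: "d = - s * x + ?P * w" by (auto simp: dvd_def algebra_simps)
  have sd: "s + d * u = ?P * (s * v + w * u)"
  proof -
    have "s + d * u = s * (1 - x * u) + ?P * w * u" by (simp add: w algebra_simps)
    also have "1 - x * u = v * ?P" using xv by simp
    finally show ?thesis by (simp add: algebra_simps)
  qed
  define h where "h = ?P ^ m * d"
  have t: "h^2 dvd poly (H (Suc m)) (Y + h) - poly (H (Suc m)) Y - h * u"
    unfolding u_def by (rule taylor_dvd)
  have "?P ^ (Suc m) dvd h^2"
  proof -
    have "?P ^ (Suc m) dvd ?P ^ (2 * m)" using m by (intro le_imp_power_dvd) simp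
    also have "?P ^ (2*m) dvd h^2" by (simp add: h_def power_mult_distrib power_mult[symmetric] mult.commute)
    finally show ?thesis .
  qed
  with t have t2: "?P ^ Suc m dvd poly (H (Suc m)) (Y + h) - poly (H (Suc m)) Y - h * u"
    using dvd_trans by blast
  have "poly (H (Suc m)) Y + h * u = ?P ^ Suc m * (s * v + w * u)"
  proof -
    have "poly (H (Suc m)) Y + h * u = ?P ^ m * (s + d * u)" by (simp add: s h_def algebra_simps)
    also have "\<dots> = ?P ^ Suc m * (s * v + w * u)" by (simp add: sd)
    finally show ?thesis .
  qed
  then have "?P ^ Suc m dvd poly (H (Suc m)) Y + h * u" by simp
  from dvd_add[OF t2 this] have "?P ^ Suc m dvd poly (H (Suc m)) (Y + h)" by simp
  then show ?thesis using d0 unfolding h_def by blast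
qed

lemma Yseq_inv:
  assumes b: "b \<in> B" and m: "m \<ge> 1"
  shows "0 \<le> Yseq p H b m \<and> Yseq p H b m < int p ^ m \<and> int p ^ m dvd poly (H m) (Yseq p H b m)
      \<and> int p dvd Yseq p H b m - b"
  using m
proof (induct m rule: dec_induct)
  case base
  have "int p dvd poly (H 1) b - poly F b" using hF[of 1] by (intro pcong_eval) auto
  moreover have "poly F b = 0" using b finB by (simp add: Fdef poly_prod)
  ultimately show ?case using b Bsub by auto
next
  case (step m)
  let ?Y = "Yseq p H b m"
  have ex: "\<exists>d. 0 \<le> d \<and> d < int p \<and> int p ^ Suc m dvd poly (H (Suc m)) (?Y + int p ^ m * d)"
    using step_exists[of m b ?Y] step b by auto
  define d where "d = hstep p H m ?Y"
  have d: "0 \<le> d \<and> d < int p \<and> int p ^ Suc m dvd poly (H (Suc m)) (?Y + int p ^ m * d)"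
    unfolding d_def hstep_def by (rule someI_ex[OF ex])
  have Ys: "Yseq p H b (Suc m) = ?Y + int p ^ m * d" using step(1) by (simp add: d_def)
  have "int p ^ m * d \<le> int p ^ m * (int p - 1)" using d by (intro mult_left_mono) auto
  then have lt: "?Y + int p ^ m * d < int p ^ Suc m" using step(3) by (simp add: algebra_simps)
  have "int p dvd int p ^ m * d" using step(1) by (simp add: dvd_mult2 dvd_power)
  then have "int p dvd ?Y + int p ^ m * d - b" using step(3)
    by (metis add_diff_eq diff_add_eq dvd_add)
  then show ?case using Ys d step(3) lt by simp
qed

lemma Yseq_diff:
  assumes b: "b \<in> B"
  shows "\<exists>d. 0 \<le> d \<and> d < int p \<and> Yseq p H b (Suc i) - Yseq p H b i = int p ^ i * d"
proof (cases i)
  case 0 then show ?thesis using b Bsub by auto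
next
  case (Suc j)
  let ?Y = "Yseq p H b i"
  have ex: "\<exists>d. 0 \<le> d \<and> d < int p \<and> int p ^ Suc i dvd poly (H (Suc i)) (?Y + int p ^ i * d)"
    using step_exists[of i b ?Y] Yseq_inv[OF b, of i] b Suc by auto
  have d: "0 \<le> hstep p H i ?Y \<and> hstep p H i ?Y < int p"
    using someI_ex[OF ex] unfolding hstep_def by blast
  show ?thesis using d Suc by auto
qed

lemma ydig_trunc:
  assumes b: "b \<in> B"
  shows "zp_trunc p (ydig p H b) m = Yseq p H b m" and "ydig p H b i < p"
proof -
  have dig: "int (ydig p H b i) * int p ^ i = Yseq p H b (Suc i) - Yseq p H b i \<and> ydig p H b i < p" for i
  proof -
    obtain d where d: "0 \<le> d" "d < int p" "Yseq p H b (Suc i) - Yseq p H b i = int p ^ i * d"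
      using Yseq_diff[OF b] by blast
    then have "ydig p H b i = nat d" using p_pos by (simp add: ydig_def)
    then show ?thesis using d by (simp add: mult.commute)
  qed
  show "zp_trunc p (ydig p H b) m = Yseq p H b m"
    by (induct m) (auto simp: zp_trunc_Suc dig)
  show "ydig p H b i < p" using dig by blast
qed

lemma hroot_exists:
  assumes b: "b \<in> B"
  shows "hroot p H (ydig p H b) \<and> int (ydig p H b 0) = b"
proof -
  have "int p ^ m dvd poly (H m) (zp_trunc p (ydig p H b) m)" for m
  proof (cases "m = 0")
    case True then show ?thesis by simp
  next
    case False
    then show ?thesis using Yseq_inv[OF b, of m] ydig_trunc(1)[OF b] by simp
  qed
  moreover have "int (ydig p H b 0) = b" using ydig_trunc(1)[OF b, of 1] by (simp add: zp_trunc_1)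
  ultimately show ?thesis using ydig_trunc(2)[OF b] unfolding hroot_def by blast
qed

lemma card_hroot: "card {y. hroot p H y} = card B"
proof -
  have "bij_betw (\<lambda>y. int (y 0)) {y. hroot p H y} B"
  proof (rule bij_betwI')
    show "\<And>x y. x \<in> {y. hroot p H y} \<Longrightarrow> y \<in> {y. hroot p H y} \<Longrightarrow> (int (x 0) = int (y 0)) = (x = y)"
      using hroot_unique by auto
    show "\<And>x. x \<in> {y. hroot p H y} \<Longrightarrow> int (x 0) \<in> B" using hroot_0 by auto
    show "\<And>y. y \<in> B \<Longrightarrow> \<exists>x\<in>{y. hroot p H y}. y = int (x 0)" using hroot_exists by fastforce
  qed
  then show ?thesis by (rule bij_betw_same_card)
qed

end

lemma degree_linprod: "finite B \<Longrightarrow> degree (\<Prod>b\<in>B. [:-b,1::int:]) = card B"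
  by (subst degree_prod_sum_eq) auto

lemma lead_linprod: "finite B \<Longrightarrow> coeff (\<Prod>b\<in>B. [:-b,1::int:]) (card B) = 1"
  using lead_coeff_prod[of "\<lambda>b. [:-b,1::int:]" B] degree_linprod[of B] by simp

lemma coeff_linprod_big: "finite B \<Longrightarrow> card B < i \<Longrightarrow> coeff (smult g (\<Prod>b\<in>B. [:-b,1::int:])) i = 0"
  by (simp add: coeff_eq_0 degree_linprod)

definition good :: "nat \<Rightarrow> nat \<Rightarrow> (nat \<Rightarrow> nat \<Rightarrow> nat) \<Rightarrow> bool" where
  "good p n a \<longleftrightarrow> (\<forall>j<n. a j 0 = 0 \<and> (\<forall>i. a j i < p))"

definition zc :: "nat \<Rightarrow> (nat \<Rightarrow> nat \<Rightarrow> nat) \<Rightarrow> bool" where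
  "zc k a \<longleftrightarrow> (\<forall>j<k. \<forall>i. 1 \<le> i \<and> i < k - j \<longrightarrow> a j i = 0)"

definition shiftd :: "(nat \<Rightarrow> nat) \<Rightarrow> nat \<Rightarrow> nat" where
  "shiftd x = (\<lambda>i. x (Suc i))"

lemma zp_trunc_shift: "zp_trunc p x (Suc m) = int (x 0) + int p * zp_trunc p (shiftd x) m"
  by (induct m) (auto simp: zp_trunc_Suc shiftd_def algebra_simps)

lemma trunc_zero_prefix:
  assumes "\<And>i. i < L \<Longrightarrow> d i = 0"
  shows "zp_trunc p d L = 0"
  using assms by (simp add: zp_trunc_def)

definition Hpol :: "nat \<Rightarrow> nat \<Rightarrow> nat \<Rightarrow> (nat \<Rightarrow> nat \<Rightarrow> nat) \<Rightarrow> nat \<Rightarrow> int poly" where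
  "Hpol p n k a m = map_poly (\<lambda>c. c div int p ^ k) (pcompose (fK p n a (m + k)) [:0, int p:])"

lemma coeff_fK_scaled: "coeff (pcompose (fK p n a K) [:0, int p:]) i =
   (if i < n then zp_trunc p (a i) K * int p ^ i else if i = n then int p ^ n else 0)"
  by (simp add: coeff_pcompose_scale coeff_fK)

context
  fixes p n r k :: nat and a :: "nat \<Rightarrow> nat \<Rightarrow> nat"
  assumes pp: "prime p" and n1: "n \<ge> 1" and rn: "r \<le> n" and rn2: "r = n \<or> r + 2 \<le> n"
    and kdef: "k = min (r + 1) n"
    and gd: "good p n a" and zz: "zc k a"
begin

lemma p_pos': "p > 0" using pp prime_gt_0_nat by blast

lemma k_le: "k \<le> n" "k \<ge> 1" using kdef n1 by auto

lemma trunc_low: "i < n \<Longrightarrow> i < k \<Longrightarrow> zp_trunc p (a i) (k - i) = 0"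
  using gd zz unfolding good_def zc_def by (intro trunc_zero_prefix) (metis One_nat_def Suc_leI not_gr0)

lemma trunc_dvd: "i < n \<Longrightarrow> K \<ge> k \<Longrightarrow> int p ^ k dvd zp_trunc p (a i) K * int p ^ i"
proof -
  assume i: "i < n" and K: "K \<ge> k"
  show ?thesis
  proof (cases "i < k")
    case True
    have "int p ^ (k - i) dvd zp_trunc p (a i) K - zp_trunc p (a i) (k - i)"
      using K by (intro zp_trunc_dvd_diff) simp
    then have "int p ^ (k - i) dvd zp_trunc p (a i) K" using trunc_low[OF i True] by simp
    then have "int p ^ (k - i) * int p ^ i dvd zp_trunc p (a i) K * int p ^ i" by (rule mult_dvd_mono) simp
    then show ?thesis using True by (simp flip: power_add)
  next
    case False
    then show ?thesis by (simp add: le_imp_power_dvd)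
  qed
qed

lemma coeff_scaled_dvd: "K \<ge> k \<Longrightarrow> int p ^ k dvd coeff (pcompose (fK p n a K) [:0, int p:]) i"
  using trunc_dvd k_le by (auto simp: coeff_fK_scaled le_imp_power_dvd)

lemma Hpol_smult: "smult (int p ^ k) (Hpol p n k a m) = pcompose (fK p n a (m + k)) [:0, int p:]"
  by (rule poly_eqI) (simp add: Hpol_def coeff_map_poly coeff_scaled_dvd)

lemma coeff_Hpol: "int p ^ k * coeff (Hpol p n k a m) i = coeff (pcompose (fK p n a (m + k)) [:0, int p:]) i"
  using Hpol_smult by (metis coeff_smult)

lemma poly_Hpol: "int p ^ k * poly (Hpol p n k a m) t = poly (fK p n a (m + k)) (int p * t)"
proof -
  have "int p ^ k * poly (Hpol p n k a m) t = poly (smult (int p ^ k) (Hpol p n k a m)) t" by simp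
  also have "\<dots> = poly (fK p n a (m + k)) (int p * t)" by (simp add: Hpol_smult poly_pcompose mult.commute)
  finally show ?thesis .
qed

lemma Hpol_cong: "m \<le> m' \<Longrightarrow> [:int p ^ m:] dvd Hpol p n k a m' - Hpol p n k a m"
proof -
  assume mm: "m \<le> m'"
  show ?thesis unfolding const_poly_dvd_iff
  proof
    fix i
    have "[:int p ^ (m + k):] dvd fK p n a (m' + k) - fK p n a (m + k)" using mm by (intro fK_cong) simp
    then have "[:int p ^ (m + k):] dvd pcompose (fK p n a (m' + k) - fK p n a (m + k)) [:0, int p:]"
      by (rule pcong_pcompose)
    then have "int p ^ (m + k) dvd coeff (pcompose (fK p n a (m' + k)) [:0, int p:]) i - coeff (pcompose (fK p n a (m + k)) [:0, int p:]) i"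
      by (simp add: const_poly_dvd_iff pcompose_diff)
    then have "int p ^ k * int p ^ m dvd int p ^ k * (coeff (Hpol p n k a m') i - coeff (Hpol p n k a m) i)"
      by (simp only: coeff_Hpol[symmetric] right_diff_distrib power_add mult.commute)
    then show "int p ^ m dvd coeff (Hpol p n k a m' - Hpol p n k a m) i"
      using p_pos' by (subst (asm) dvd_mult_cancel_left) auto
  qed
qed

lemma coeff_Hpol_eq: "int p ^ k * coeff (Hpol p n k a m) i =
   (if i < n then zp_trunc p (a i) (m + k) * int p ^ i else if i = n then int p ^ n else 0)"
  by (simp add: coeff_Hpol coeff_fK_scaled)

lemma Hpol_coeff_low:
  assumes i: "i < k" and m: "m \<ge> 1"
  shows "int p dvd coeff (Hpol p n k a m) i - int (a i (k - i))"
proof -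
  have "i < n" using i k_le by simp
  let ?A = "zp_trunc p (a i) (m + k)"
  have "int p ^ Suc (k - i) dvd ?A - zp_trunc p (a i) (Suc (k - i))"
    using m i by (intro zp_trunc_dvd_diff) simp
  moreover have "zp_trunc p (a i) (Suc (k - i)) = int (a i (k - i)) * int p ^ (k - i)"
    using trunc_low[OF \<open>i < n\<close> i] by (simp add: zp_trunc_Suc)
  ultimately obtain t where "?A - int (a i (k - i)) * int p ^ (k - i) = int p ^ Suc (k - i) * t"
    by (auto elim!: dvdE)
  then have t: "?A = int (a i (k - i)) * int p ^ (k - i) + int p ^ Suc (k - i) * t" by simp
  have "int p ^ k * coeff (Hpol p n k a m) i = ?A * int p ^ i" using coeff_Hpol_eq \<open>i < n\<close> by simp
  also have "\<dots> = int p ^ k * (int (a i (k - i)) + int p * t)"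
  proof -
    have e: "k = (k - i) + i" using i by simp
    show ?thesis unfolding t by (subst (3 4) e) (simp add: power_add algebra_simps)
  qed
  finally have "coeff (Hpol p n k a m) i = int (a i (k - i)) + int p * t" using p_pos' by simp
  then show ?thesis by simp
qed

lemma Hpol_coeff_zero: "i > n \<Longrightarrow> coeff (Hpol p n k a m) i = 0"
  using coeff_Hpol_eq[of m i] p_pos' by simp

lemma Hpol_coeff_top: "r = n \<Longrightarrow> coeff (Hpol p n k a m) n = 1"
  using coeff_Hpol_eq[of m n] p_pos' kdef by simp

lemma Hpol_coeff_high:
  assumes i: "k \<le> i" "i \<le> n" and m: "m \<ge> 1" and r: "r < n"
  shows "int p dvd coeff (Hpol p n k a m) i"
proof -
  have kn: "k < n" using kdef r rn2 by auto
  show ?thesis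
  proof (cases "i < n")
    case True
    have e: "int p ^ k * coeff (Hpol p n k a m) i = int p ^ k * (zp_trunc p (a i) (m + k) * int p ^ (i - k))"
      using coeff_Hpol_eq[of m i] True i by (simp add: power_add[symmetric])
    then have c: "coeff (Hpol p n k a m) i = zp_trunc p (a i) (m + k) * int p ^ (i - k)" using p_pos' by simp
    show ?thesis
    proof (cases "i = k")
      case True
      have "int p ^ 1 dvd zp_trunc p (a i) (m + k) - zp_trunc p (a i) 1"
        using k_le by (intro zp_trunc_dvd_diff) simp
      moreover have "zp_trunc p (a i) 1 = 0" using gd \<open>i < n\<close> by (simp add: good_def zp_trunc_1)
      ultimately show ?thesis using c True by simp
    next
      case False
      then show ?thesis using c i by (simp add: dvd_power)
    qed
  next
    case False
    then have "i = n" using i by simp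
    then have "int p ^ k * coeff (Hpol p n k a m) i = int p ^ k * int p ^ (n - k)"
      using coeff_Hpol_eq[of m i] kn by (simp add: power_add[symmetric])
    then show ?thesis using kn p_pos' by (simp add: dvd_power)
  qed
qed

lemma root_digit0:
  assumes x: "is_zp_root p n a x"
  shows "x 0 = 0"
proof -
  have "int p ^ 1 dvd poly (fK p n a 1) (zp_trunc p x 1)" using x unfolding is_zp_root_fK by blast
  moreover have "poly (fK p n a 1) (zp_trunc p x 1) = int (x 0) ^ n"
    using gd by (simp add: poly_fK good_def zp_trunc_1)
  ultimately have "int p dvd int (x 0) ^ n" by simp
  moreover have "prime (int p)" using pp by simp
  ultimately have "int p dvd int (x 0)" using prime_dvd_power by blast
  moreover have "x 0 < p" using x by (simp add: is_zp_root_def)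
  ultimately have "int (x 0) = 0" using p_pos' by (intro dvd_small_eq[of _ "int p"]) auto
  then show ?thesis by simp
qed

lemma roots_iff: "is_zp_root p n a x \<longleftrightarrow> x 0 = 0 \<and> hroot p (Hpol p n k a) (shiftd x)"
proof
  assume x: "is_zp_root p n a x"
  have x0: "x 0 = 0" by (rule root_digit0[OF x])
  have "int p ^ m dvd poly (Hpol p n k a m) (zp_trunc p (shiftd x) m)" for m
  proof -
    define K where "K = m + k - 1"
    have K: "m + k = Suc K" using k_le unfolding K_def by simp
    have "int p ^ (m + k) dvd poly (fK p n a (m + k)) (zp_trunc p x (m + k))"
      using x unfolding is_zp_root_fK by blast
    also have "poly (fK p n a (m + k)) (zp_trunc p x (m + k)) = int p ^ k * poly (Hpol p n k a m) (zp_trunc p (shiftd x) K)"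
      by (simp add: K zp_trunc_shift x0 poly_Hpol)
    finally have "int p ^ k * int p ^ m dvd int p ^ k * poly (Hpol p n k a m) (zp_trunc p (shiftd x) K)"
      by (simp add: power_add mult.commute)
    then have d1: "int p ^ m dvd poly (Hpol p n k a m) (zp_trunc p (shiftd x) K)" using p_pos' by simp
    have "int p ^ m dvd poly (Hpol p n k a m) (zp_trunc p (shiftd x) K) - poly (Hpol p n k a m) (zp_trunc p (shiftd x) m)"
      using K k_le by (intro pcong_eval zp_trunc_dvd_diff) auto
    from dvd_diff[OF d1 this] show ?thesis by simp
  qed
  moreover have "\<forall>i. shiftd x i < p" using x by (simp add: is_zp_root_def shiftd_def)
  ultimately show "x 0 = 0 \<and> hroot p (Hpol p n k a) (shiftd x)" using x0 by (simp add: hroot_def)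
next
  assume h: "x 0 = 0 \<and> hroot p (Hpol p n k a) (shiftd x)"
  then have x0: "x 0 = 0" and hr: "hroot p (Hpol p n k a) (shiftd x)" by auto
  have dig: "\<forall>i. x i < p"
  proof
    fix i show "x i < p" using hr x0 p_pos' unfolding hroot_def shiftd_def by (cases i) auto
  qed
  have "int p ^ K dvd poly (fK p n a K) (zp_trunc p x K)" for K
  proof -
    let ?m = K
    define L where "L = ?m + k - 1"
    have L: "?m + k = Suc L" using k_le unfolding L_def by simp
    have "int p ^ ?m dvd poly (Hpol p n k a ?m) (zp_trunc p (shiftd x) ?m)" using hr by (simp add: hroot_def)
    moreover have "int p ^ ?m dvd poly (Hpol p n k a ?m) (zp_trunc p (shiftd x) L) - poly (Hpol p n k a ?m) (zp_trunc p (shiftd x) ?m)"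
      using L k_le by (intro pcong_eval zp_trunc_dvd_diff) auto
    ultimately have "int p ^ ?m dvd poly (Hpol p n k a ?m) (zp_trunc p (shiftd x) L)"
      using dvd_add by fastforce
    then have "int p ^ k * int p ^ ?m dvd int p ^ k * poly (Hpol p n k a ?m) (zp_trunc p (shiftd x) L)"
      by simp
    also have "int p ^ k * poly (Hpol p n k a ?m) (zp_trunc p (shiftd x) L) = poly (fK p n a (?m + k)) (zp_trunc p x (?m + k))"
      by (simp add: L zp_trunc_shift x0 poly_Hpol)
    finally have d1: "int p ^ (?m + k) dvd poly (fK p n a (?m + k)) (zp_trunc p x (?m + k))"
      by (simp add: power_add mult.commute)
    then have d2: "int p ^ K dvd poly (fK p n a (?m + k)) (zp_trunc p x (?m + k))"
      by (meson dvd_trans le_add1 le_imp_power_dvd)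
    have "int p ^ K dvd poly (fK p n a (?m + k)) (zp_trunc p x (?m + k)) - poly (fK p n a K) (zp_trunc p x K)"
      by (intro pcong_eval fK_cong zp_trunc_dvd_diff) simp_all
    from dvd_diff[OF d2 this] show ?thesis by simp
  qed
  then show "is_zp_root p n a x" using dig unfolding is_zp_root_fK by blast
qed

lemma num_roots_low:
  assumes g: "\<not> int p dvd \<gamma>" "r = n \<Longrightarrow> \<gamma> = 1"
    and B: "B \<subseteq> {0..<int p}" "card B = r"
    and cc: "\<forall>j<k. int (a j (k - j)) = coeff (smult \<gamma> (\<Prod>b\<in>B. [:-b,1:])) j mod int p"
  shows "num_roots p n a = r"
proof -
  let ?F = "smult \<gamma> (\<Prod>b\<in>B. [:-b,1:])"
  let ?H = "Hpol p n k a"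
  have finB: "finite B" using B finite_subset by blast
  have hF: "[:int p:] dvd ?H m - ?F" if m: "m \<ge> 1" for m
    unfolding const_poly_dvd_iff
  proof
    fix i
    show "int p dvd coeff (?H m - ?F) i"
    proof (cases "i < k")
      case True
      have "int p dvd coeff (?H m) i - int (a i (k - i))" by (rule Hpol_coeff_low[OF True m])
      moreover have "int p dvd int (a i (k - i)) - coeff ?F i"
        using cc True by (simp add: mod_eq_dvd_iff[symmetric])
      ultimately show ?thesis using dvd_add by fastforce
    next
      case False
      show ?thesis
      proof (cases "r = n")
        case True
        then have kn: "k = n" using kdef by simp
        show ?thesis
        proof (cases "i = n")
          case True
          then show ?thesis using Hpol_coeff_top[OF \<open>r = n\<close>] g(2)[OF \<open>r = n\<close>] lead_linprod[OF finB] B(2) \<open>r = n\<close> by simp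
        next
          case False
          then have "i > n" using \<open>\<not> i < k\<close> kn by simp
          then show ?thesis using Hpol_coeff_zero[of i m] coeff_linprod_big[OF finB, of i \<gamma>] B(2) \<open>r = n\<close> by auto
        qed
      next
        case False
        then have rl: "r < n" using rn by simp
        have F0: "coeff ?F i = 0" using coeff_linprod_big[OF finB] B(2) kdef \<open>\<not> i < k\<close> rl by simp
        show ?thesis
        proof (cases "i \<le> n")
          case True
          then show ?thesis using Hpol_coeff_high[of i m] \<open>\<not> i < k\<close> m rl F0 by (simp del: coeff_smult)
        next
          case False
          then show ?thesis using Hpol_coeff_zero F0 by (simp del: coeff_smult)
        qed
      qed
    qed
  qed
  have card1: "card {y. hroot p ?H y} = card B"
    by (rule card_hroot[OF pp Hpol_cong hF refl B(1) g(1)]) auto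
  have "bij_betw shiftd {x. is_zp_root p n a x} {y. hroot p ?H y}"
  proof (rule bij_betwI')
    show "\<And>x y. x \<in> {x. is_zp_root p n a x} \<Longrightarrow> y \<in> {x. is_zp_root p n a x} \<Longrightarrow> (shiftd x = shiftd y) = (x = y)"
    proof -
      fix x y assume x: "x \<in> {x. is_zp_root p n a x}" and y: "y \<in> {x. is_zp_root p n a x}"
      have "x 0 = 0" "y 0 = 0" using x y root_digit0 by auto
      show "(shiftd x = shiftd y) = (x = y)"
      proof
        assume e: "shiftd x = shiftd y"
        show "x = y"
        proof
          fix i show "x i = y i" using e \<open>x 0 = 0\<close> \<open>y 0 = 0\<close> by (cases i) (auto simp: shiftd_def fun_eq_iff)
        qed
      qed simp
    qed
    show "\<And>x. x \<in> {x. is_zp_root p n a x} \<Longrightarrow> shiftd x \<in> {y. hroot p ?H y}" using roots_iff by auto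
    show "\<And>y. y \<in> {y. hroot p ?H y} \<Longrightarrow> \<exists>x\<in>{x. is_zp_root p n a x}. y = shiftd x"
    proof -
      fix y assume y: "y \<in> {y. hroot p ?H y}"
      define x where "x = (\<lambda>i. case i of 0 \<Rightarrow> 0 | Suc j \<Rightarrow> y j)"
      have "shiftd x = y" by (simp add: x_def shiftd_def)
      moreover have "x 0 = 0" by (simp add: x_def)
      ultimately show "\<exists>x\<in>{x. is_zp_root p n a x}. y = shiftd x" using y roots_iff by auto
    qed
  qed
  then have "card {x. is_zp_root p n a x} = card {y. hroot p ?H y}" by (rule bij_betw_same_card)
  then show ?thesis using card1 B(2) by (simp add: num_roots_def)
qed

end

lemma factor_roots:
  fixes f :: "int poly" and P :: int
  assumes pr: "prime P"
  shows "(\<forall>\<alpha>\<in>set as. P ^ N dvd poly f \<alpha>) \<Longrightarrow> sorted_wrt (\<lambda>x y. \<not> P ^ D dvd y - x) as \<Longrightarrow>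
    \<exists>g. [:P ^ (N - length as * D):] dvd f - (\<Prod>b\<leftarrow>as. [:-b,1:]) * g"
proof (induct as arbitrary: f N)
  case Nil
  show ?case by (rule exI[of _ f]) simp
next
  case (Cons \<alpha> rest)
  define q where "q = synthetic_div f \<alpha>"
  have fq: "f = [:-\<alpha>,1:] * q + [:poly f \<alpha>:]" unfolding q_def by (rule synthetic_div_correct'[symmetric])
  have "P ^ (N - D) dvd poly q \<beta>" if b: "\<beta> \<in> set rest" for \<beta>
  proof -
    have "poly f \<beta> = (\<beta> - \<alpha>) * poly q \<beta> + poly f \<alpha>" by (subst fq) (simp add: algebra_simps)
    then have "(\<beta> - \<alpha>) * poly q \<beta> = poly f \<beta> - poly f \<alpha>" by simp
    moreover have "P ^ N dvd poly f \<beta> - poly f \<alpha>" using Cons.prems(1) b by (intro dvd_diff) auto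
    ultimately have "P ^ N dvd (\<beta> - \<alpha>) * poly q \<beta>" by simp
    moreover have "\<not> P ^ D dvd \<beta> - \<alpha>" using Cons.prems(2) b by simp
    ultimately show ?thesis using prime_power_dvd_cancel[OF pr] by blast
  qed
  moreover have "sorted_wrt (\<lambda>x y. \<not> P ^ D dvd y - x) rest" using Cons.prems(2) by simp
  ultimately obtain g where g: "[:P ^ (N - D - length rest * D):] dvd q - (\<Prod>b\<leftarrow>rest. [:-b,1:]) * g"
    using Cons.hyps by blast
  have e: "N - D - length rest * D = N - length (\<alpha> # rest) * D" by simp
  have "f - (\<Prod>b\<leftarrow>\<alpha> # rest. [:-b,1:]) * g = [:-\<alpha>,1:] * (q - (\<Prod>b\<leftarrow>rest. [:-b,1:]) * g) + [:poly f \<alpha>:]"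
    by (subst fq) (simp add: algebra_simps)
  moreover have "[:P ^ (N - length (\<alpha> # rest) * D):] dvd [:-\<alpha>,1:] * (q - (\<Prod>b\<leftarrow>rest. [:-b,1:]) * g)"
    using g e by (metis dvd_mult)
  moreover have "[:P ^ (N - length (\<alpha> # rest) * D):] dvd [:poly f \<alpha>:]"
  proof -
    have "P ^ (N - length (\<alpha> # rest) * D) dvd P ^ N" by (simp add: le_imp_power_dvd)
    also have "P ^ N dvd poly f \<alpha>" using Cons.prems(1) by simp
    finally show ?thesis by (simp add: const_poly_dvd_iff coeff_pCons split: nat.split)
  qed
  ultimately show ?case by (metis dvd_add)
qed

lemma ring_id1: "(c + x) * Q - x * M = (c + x) * (Q - M) + c * (M::'a::comm_ring)"
  by (simp add: algebra_simps)

lemma ring_id2: "X * A - Y * B = X * (A - B) + (X - Y) * (B::'a::comm_ring)"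
  by (simp add: algebra_simps)

lemma linprod_mod_monom:
  fixes P :: int
  shows "(\<forall>b\<in>set as. P dvd b) \<Longrightarrow> [:P:] dvd (\<Prod>b\<leftarrow>as. [:-b,1:]) - monom 1 (length as)"
proof (induct as)
  case Nil then show ?case by (simp add: monom_0 one_pCons)
next
  case (Cons \<alpha> rest)
  have m: "monom 1 (length (\<alpha> # rest)) = [:0,1:] * monom (1::int) (length rest)"
    by (simp add: monom_Suc)
  have "(\<Prod>b\<leftarrow>\<alpha> # rest. [:-b,1:]) - monom 1 (length (\<alpha> # rest))
      = [:-\<alpha>,1:] * ((\<Prod>b\<leftarrow>rest. [:-b,1:]) - monom 1 (length rest)) + [:-\<alpha>:] * monom 1 (length rest)"
  proof -
    have x: "[:-\<alpha>,1:] - [:0,1:] = [:-\<alpha>:]" by simp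
    have "[:-\<alpha>,1:] * Q - [:0,1:] * M = [:-\<alpha>,1:] * (Q - M) + [:-\<alpha>:] * M" for Q M :: "int poly"
      using ring_id2[of "[:-\<alpha>,1:]" Q "[:0,1:]" M] x by simp
    then show ?thesis unfolding m by simp
  qed
  moreover have "[:P:] dvd [:-\<alpha>:]" using Cons.prems by (simp add: const_poly_dvd_iff coeff_pCons split: nat.split)
  ultimately show ?case using Cons by (metis dvd_add dvd_mult dvd_mult2 list.set_intros(2))
qed

lemma pcompose_one: "pcompose (1::int poly) q = 1"
  by (metis one_pCons pcompose_const)

lemma pcompose_linprod:
  fixes P :: int
  shows "pcompose (\<Prod>b\<leftarrow>as. [:-(P * b),1:]) [:0,P:] = smult (P ^ length as) (\<Prod>b\<leftarrow>as. [:-b,1:])"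
proof (induct as)
  case Nil then show ?case by (simp add: one_pCons)
next
  case (Cons b rest)
  have h: "pcompose [:-(P * b),1:] [:0,P:] = smult P [:-b,1:]" by (simp add: pcompose_pCons)
  have "pcompose (\<Prod>b\<leftarrow>b # rest. [:-(P * b),1:]) [:0,P:] = pcompose [:-(P * b),1:] [:0,P:] * pcompose (\<Prod>b\<leftarrow>rest. [:-(P * b),1:]) [:0,P:]"
    by (simp only: prod_list.Cons list.map pcompose_mult)
  also have "\<dots> = smult P [:-b,1:] * smult (P ^ length rest) (\<Prod>b\<leftarrow>rest. [:-b,1:])"
    by (simp only: h Cons.hyps)
  also have "\<dots> = smult (P ^ length (b # rest)) ([:-b,1:] * (\<Prod>b\<leftarrow>rest. [:-b,1:]))"
    by (simp only: mult_smult_left mult_smult_right smult_smult list.size power_Suc) (simp add: mult_ac)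
  finally show ?case by (simp only: prod_list.Cons list.map)
qed

lemma linprod_cong:
  fixes P :: int
  shows "length as = length bs \<Longrightarrow> (\<forall>i<length as. P dvd as ! i - bs ! i) \<Longrightarrow>
    [:P:] dvd (\<Prod>b\<leftarrow>as. [:-b,1:]) - (\<Prod>b\<leftarrow>bs. [:-b,1:])"
proof (induct as arbitrary: bs)
  case Nil then show ?case by simp
next
  case (Cons a as)
  then obtain b bs' where bs: "bs = b # bs'" by (cases bs) auto
  have IH: "[:P:] dvd (\<Prod>b\<leftarrow>as. [:-b,1:]) - (\<Prod>b\<leftarrow>bs'. [:-b,1:])"
    using Cons bs by force
  have ab: "P dvd a - b" using Cons.prems bs by force
  have "(\<Prod>b\<leftarrow>a # as. [:-b,1:]) - (\<Prod>b\<leftarrow>b # bs'. [:-b,1:])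
     = [:-a,1:] * ((\<Prod>b\<leftarrow>as. [:-b,1:]) - (\<Prod>b\<leftarrow>bs'. [:-b,1:])) + [:b - a:] * (\<Prod>b\<leftarrow>bs'. [:-b,1:])"
  proof -
    have x: "[:-a,1:] - [:-b,1:] = [:b - a:]" by simp
    show ?thesis by (simp only: prod_list.Cons list.map ring_id2 x)
  qed
  moreover have "[:P:] dvd [:b - a:]" using ab by (simp add: const_poly_dvd_iff coeff_pCons dvd_diff_commute split: nat.split)
  ultimately show ?case using IH bs by (metis dvd_add dvd_mult dvd_mult2)
qed

lemma exists_sep_level:
  fixes S :: "(nat \<Rightarrow> nat) set"
  assumes "finite S"
  shows "\<exists>D. \<forall>x\<in>S. \<forall>y\<in>S. x \<noteq> y \<longrightarrow> (\<exists>i<D. x i \<noteq> (y i :: nat))"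
proof -
  define w where "w = (\<lambda>(x::nat\<Rightarrow>nat, y). SOME i. x i \<noteq> y i)"
  define D where "D = Suc (Max (w ` (S \<times> S)))"
  have "\<exists>i<D. x i \<noteq> y i" if "x \<in> S" "y \<in> S" "x \<noteq> y" for x y
  proof -
    have ex: "\<exists>i. x i \<noteq> y i" using that by auto
    have "x (w (x,y)) \<noteq> y (w (x,y))" unfolding w_def using someI_ex[OF ex] by simp
    moreover have "w (x,y) \<le> Max (w ` (S \<times> S))" using that assms by (intro Max_ge) auto
    ultimately show ?thesis unfolding D_def by (intro exI[of _ "w (x,y)"]) auto
  qed
  then show ?thesis by blast
qed


lemma root_digit0':
  assumes pp: "prime p" and n1: "n \<ge> 1" and gd: "good p n a" and x: "is_zp_root p n a x"
  shows "x 0 = 0"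
proof -
  have "int p ^ 1 dvd poly (fK p n a 1) (zp_trunc p x 1)" using x unfolding is_zp_root_fK by blast
  moreover have "poly (fK p n a 1) (zp_trunc p x 1) = int (x 0) ^ n"
    using gd by (simp add: poly_fK good_def zp_trunc_1)
  ultimately have "int p dvd int (x 0) ^ n" by simp
  moreover have "prime (int p)" using pp by simp
  ultimately have "int p dvd int (x 0)" using prime_dvd_power by blast
  moreover have "x 0 < p" using x by (simp add: is_zp_root_def)
  ultimately have "int (x 0) = 0" by (intro dvd_small_eq[of _ "int p"]) auto
  then show ?thesis by simp
qed

lemma digits_from_cong:
  fixes P q A :: int and d :: "nat \<Rightarrow> nat" and e :: nat
  assumes P: "P = int p" "p > 1" and dig: "\<forall>i. d i < p"
    and A: "P ^ Suc e dvd zp_trunc p d M - P ^ e * q" and M: "M \<ge> Suc e"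
  shows "(\<forall>i<e. d i = 0) \<and> int (d e) = q mod P"
proof -
  define T where "T = zp_trunc p d (Suc e)"
  define u where "u = q mod P"
  have u: "0 \<le> u" "u < P" using P by (auto simp: u_def)
  have d1: "P ^ Suc e dvd zp_trunc p d M - T" unfolding T_def P using M by (intro zp_trunc_dvd_diff)
  moreover have c3: "P ^ Suc e dvd P ^ e * q - P ^ e * u"
  proof -
    have "q - u = P * (q div P)" by (simp add: u_def minus_mod_eq_mult_div)
    then have "P ^ e * q - P ^ e * u = P ^ Suc e * (q div P)" by (simp add: right_diff_distrib[symmetric] mult.assoc)
    then show ?thesis by simp
  qed
  ultimately have "P ^ Suc e dvd (zp_trunc p d M - P ^ e * q) - (zp_trunc p d M - T) + (P ^ e * q - P ^ e * u)"
    using dvd_add[OF dvd_diff[OF A d1] c3] by blast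
  moreover have "(zp_trunc p d M - P ^ e * q) - (zp_trunc p d M - T) + (P ^ e * q - P ^ e * u) = T - P ^ e * u"
    by (simp add: algebra_simps)
  ultimately have dv: "P ^ Suc e dvd T - P ^ e * u" by simp
  have T0: "0 \<le> T" "T < P ^ Suc e" unfolding T_def P using zp_trunc_nonneg zp_trunc_less[OF dig, of "Suc e"] by auto
  have "P ^ e * u < P ^ e * P" using u P by (intro mult_strict_left_mono) auto
  then have "P ^ e * u < P ^ Suc e" by (simp add: mult.commute)
  then have Teq: "T = P ^ e * u" using T0 u P by (intro dvd_small_eq[OF _ _ _ _ dv]) auto
  have digit: "int (d i) = (T div P ^ i) mod P" if "i < Suc e" for i
    unfolding T_def P using zp_trunc_digit[of "Suc e" d p i] dig that by simp
  have "d i = 0" if i: "i < e" for i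
  proof -
    have "T = P ^ i * (P ^ (e - i) * u)" using i by (simp add: Teq mult.assoc power_add[symmetric])
    then have "T div P ^ i = P ^ (e - i) * u" using P by simp
    moreover have "P dvd P ^ (e - i) * u" using i by (simp add: dvd_power)
    ultimately show ?thesis using digit[of i] i by simp
  qed
  moreover have "int (d e) = u" using digit[of e] P u by (simp add: Teq)
  ultimately show ?thesis by (simp add: u_def)
qed


lemma sorted_wrt_distinct_all:
  "distinct xs \<Longrightarrow> (\<forall>x\<in>set xs. \<forall>y\<in>set xs. x \<noteq> y \<longrightarrow> Q x y) \<Longrightarrow> sorted_wrt Q xs"
  by (induct xs) auto

lemma fK_mod_p:
  assumes "good p n a"
  shows "[:int p:] dvd fK p n a N - monom 1 n"
  unfolding const_poly_dvd_iff
proof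
  fix j
  show "int p dvd coeff (fK p n a N - monom 1 n) j"
  proof (cases "j < n")
    case True
    have "int p ^ 1 dvd zp_trunc p (a j) (max 1 N) - zp_trunc p (a j) 1" by (intro zp_trunc_dvd_diff) simp
    moreover have "zp_trunc p (a j) 1 = 0" using assms True by (simp add: good_def zp_trunc_1)
    ultimately have "int p dvd zp_trunc p (a j) (max 1 N)" by simp
    then have "int p dvd zp_trunc p (a j) N" by (cases N) (auto simp: zp_trunc_1)
    then show ?thesis using True by (simp add: coeff_fK coeff_monom)
  qed (auto simp: coeff_fK coeff_monom)
qed

lemma sep_trunc:
  assumes "\<forall>i. x i < p" "\<forall>i. y i < p" "\<exists>i<D. x i \<noteq> y i" "D \<le> N"
  shows "\<not> int p ^ D dvd zp_trunc p y N - zp_trunc p x N"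
proof
  assume d: "int p ^ D dvd zp_trunc p y N - zp_trunc p x N"
  have "zp_trunc p y N mod int p ^ D = zp_trunc p x N mod int p ^ D" using d by (simp add: mod_eq_dvd_iff)
  then have e: "zp_trunc p y D = zp_trunc p x D" using assms by (simp add: zp_trunc_mod)
  obtain i where i: "i < D" "x i \<noteq> y i" using assms(3) by blast
  have "int (y i) = int (x i)" using zp_trunc_digit[of D y p i] zp_trunc_digit[of D x p i] assms i e by simp
  then show False using i by simp
qed

context
  fixes p n r k :: nat and a :: "nat \<Rightarrow> nat \<Rightarrow> nat" and xs :: "(nat \<Rightarrow> nat) list"
  assumes pp: "prime p" and n1: "n \<ge> 1" and rn: "r \<le> n" and rn2: "r = n \<or> r + 2 \<le> n"
    and kdef: "k = min (r + 1) n" and gd: "good p n a" and r1: "r \<ge> 1"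
    and xsd: "distinct xs" and xsl: "length xs = r" and xsr: "\<forall>x\<in>set xs. is_zp_root p n a x"
begin

lemma pge1: "p > 1" using pp prime_gt_1_nat by blast

lemma upper_poly: "\<exists>\<gamma>0 \<beta>s0. (r = n \<longrightarrow> int p dvd \<gamma>0 - 1) \<and> length \<beta>s0 = r \<and>
   (\<exists>N\<ge>k+1. [:int p ^ (k + 1):] dvd pcompose (fK p n a N) [:0, int p:] - smult (int p ^ k * \<gamma>0) (\<Prod>b\<leftarrow>\<beta>s0. [:-b,1:]))"
proof -
  let ?P = "int p"
  have ppi: "prime ?P" using pp by simp
  obtain D where D: "\<forall>x\<in>set xs. \<forall>y\<in>set xs. x \<noteq> y \<longrightarrow> (\<exists>i<D. x i \<noteq> y i)"
    using exists_sep_level[of "set xs"] by auto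
  define N where "N = k + 1 + r * D"
  have DN: "D \<le> N" using r1 unfolding N_def by (metis le_add2 le_trans mult_le_mono1 mult_1 One_nat_def)
  define \<alpha>s where "\<alpha>s = map (\<lambda>x. zp_trunc p x N) xs"
  have dig: "\<forall>i. x i < p" if "x \<in> set xs" for x using xsr that by (simp add: is_zp_root_def)
  have roots: "\<forall>\<alpha>\<in>set \<alpha>s. ?P ^ N dvd poly (fK p n a N) \<alpha>"
    using xsr unfolding \<alpha>s_def is_zp_root_fK by auto
  have sep0: "\<not> ?P ^ D dvd zp_trunc p y N - zp_trunc p x N" if m: "x \<in> set xs" "y \<in> set xs" "x \<noteq> y" for x y
    using sep_trunc[OF dig[OF m(1)] dig[OF m(2)] _ DN] D m by blast
  have sep: "sorted_wrt (\<lambda>x y. \<not> ?P ^ D dvd y - x) \<alpha>s"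
    unfolding \<alpha>s_def sorted_wrt_map using sorted_wrt_distinct_all[OF xsd, of "\<lambda>x y. \<not> ?P ^ D dvd zp_trunc p y N - zp_trunc p x N"] sep0
    by blast
  obtain g where g: "[:?P ^ (N - length \<alpha>s * D):] dvd fK p n a N - (\<Prod>b\<leftarrow>\<alpha>s. [:-b,1:]) * g"
    using factor_roots[OF ppi roots sep] by blast
  have Nl: "N - length \<alpha>s * D = k + 1" by (simp add: \<alpha>s_def xsl N_def)
  define \<beta>s0 where "\<beta>s0 = map (\<lambda>x. zp_trunc p (shiftd x) (N - 1)) xs"
  have N1: "N = Suc (N - 1)" unfolding N_def by simp
  have \<alpha>\<beta>: "\<alpha>s = map (\<lambda>b. ?P * b) \<beta>s0"
    unfolding \<alpha>s_def \<beta>s0_def map_map o_def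
  proof (rule map_cong[OF refl])
    fix x assume x: "x \<in> set xs"
    have "x 0 = 0" using root_digit0'[OF pp n1 gd] xsr x by blast
    then show "zp_trunc p x N = ?P * zp_trunc p (shiftd x) (N - 1)" by (subst N1) (simp add: zp_trunc_shift)
  qed
  have Pi_eq: "(\<Prod>b\<leftarrow>\<alpha>s. [:-b,1:]) = (\<Prod>b\<leftarrow>\<beta>s0. [:-(?P * b),1:])" by (simp add: \<alpha>\<beta> o_def)
  have lb: "length \<beta>s0 = r" by (simp add: \<beta>s0_def xsl)
  have gk: "[:?P ^ (k+1):] dvd fK p n a N - (\<Prod>b\<leftarrow>\<alpha>s. [:-b,1:]) * g" using g Nl by simp
  have gP: "[:?P:] dvd fK p n a N - (\<Prod>b\<leftarrow>\<alpha>s. [:-b,1:]) * g"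
    using gk by (rule dvd_trans[rotated]) (simp add: const_poly_dvd_iff dvd_power coeff_pCons split: nat.split)
  have fm: "[:?P:] dvd fK p n a N - monom 1 n" by (rule fK_mod_p[OF gd])
  have am: "[:?P:] dvd (\<Prod>b\<leftarrow>\<alpha>s. [:-b,1:]) - monom 1 r"
    using linprod_mod_monom[of \<alpha>s ?P] by (simp add: \<alpha>\<beta> lb)
  have "monom 1 r * g - monom 1 n = (fK p n a N - monom 1 n) - (fK p n a N - (\<Prod>b\<leftarrow>\<alpha>s. [:-b,1:]) * g) - ((\<Prod>b\<leftarrow>\<alpha>s. [:-b,1:]) - monom 1 r) * g"
    by (simp add: algebra_simps)
  then have mg: "[:?P:] dvd monom 1 r * g - monom 1 n"
    using fm gP am by (metis dvd_diff dvd_mult2)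
  have gcoef: "?P dvd coeff g j - (if j = n - r then 1 else 0)" for j
  proof -
    have "?P dvd coeff (monom 1 r * g - monom 1 n) (j + r)" using mg by (simp add: const_poly_dvd_iff)
    then have "?P dvd coeff g j - (if n = j + r then 1 else 0)" by (simp add: coeff_monom_mult coeff_monom)
    moreover have "(n = j + r) = (j = n - r)" using rn by auto
    ultimately show ?thesis by simp
  qed
  define \<gamma>0 where "\<gamma>0 = (if r = n then coeff g 0 else coeff g 0 div ?P)"
  have g0: "coeff g 0 = ?P ^ (k - r) * \<gamma>0"
  proof (cases "r = n")
    case True then show ?thesis using kdef by (simp add: \<gamma>0_def)
  next
    case False
    then have "k - r = 1" "n - r \<noteq> 0" using kdef rn rn2 by auto
    then show ?thesis using gcoef[of 0] by (simp add: \<gamma>0_def)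
  qed
  have g1: "r = n \<longrightarrow> ?P dvd \<gamma>0 - 1"
    using gcoef[of 0] by (auto simp: \<gamma>0_def)
  have gsub: "[:?P ^ (k - r + 1):] dvd pcompose g [:0,?P:] - [:?P ^ (k - r) * \<gamma>0:]"
    unfolding const_poly_dvd_iff
  proof
    fix j
    show "?P ^ (k - r + 1) dvd coeff (pcompose g [:0,?P:] - [:?P ^ (k - r) * \<gamma>0:]) j"
    proof (cases j)
      case 0
      have "poly g 0 = ?P ^ (k - r) * \<gamma>0" using g0 by (simp add: poly_0_coeff_0)
      then show ?thesis using 0 by (simp add: coeff_pcompose_scale)
    next
      case (Suc j')
      have c: "coeff (pcompose g [:0,?P:] - [:?P ^ (k - r) * \<gamma>0:]) j = coeff g j * ?P ^ j"
        using Suc by (simp add: coeff_pcompose_scale)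
      show ?thesis
      proof (cases "r = n")
        case True
        then have "k - r = 0" using kdef by simp
        then show ?thesis using c Suc by (simp add: dvd_power)
      next
        case False
        then have kr: "k - r = 1" "n - r \<ge> 2" using kdef rn rn2 by auto
        show ?thesis
        proof (cases j')
          case 0
          then have "?P dvd coeff g 1" using gcoef[of 1] kr by simp
          then show ?thesis using c Suc 0 kr by (simp add: mult_dvd_mono power2_eq_square)
        next
          case (Suc j'')
          have "?P ^ 2 dvd ?P ^ j" using Suc \<open>j = Suc j'\<close> by (intro le_imp_power_dvd) simp
          then have "?P ^ 2 dvd coeff g j * ?P ^ j" by (rule dvd_mult)
          then show ?thesis using c kr by (simp add: power2_eq_square)
        qed
      qed
    qed
  qed
  let ?B = "\<Prod>b\<leftarrow>\<beta>s0. [:-b,1:]"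
  have comp: "pcompose ((\<Prod>b\<leftarrow>\<alpha>s. [:-b,1:]) * g) [:0,?P:] = smult (?P ^ r) ?B * pcompose g [:0,?P:]"
    by (simp only: pcompose_mult Pi_eq pcompose_linprod lb)
  have c1: "[:?P ^ (k+1):] dvd pcompose (fK p n a N) [:0,?P:] - pcompose ((\<Prod>b\<leftarrow>\<alpha>s. [:-b,1:]) * g) [:0,?P:]"
    using pcong_pcompose[OF gk] by (simp add: pcompose_diff)
  have kr1: "r + (k - r + 1) = k + 1" "r + (k - r) = k" using kdef rn by auto
  have c2: "[:?P ^ (k+1):] dvd smult (?P ^ r) ?B * pcompose g [:0,?P:] - smult (?P ^ k * \<gamma>0) ?B"
  proof -
    have "smult (?P ^ r) ?B * pcompose g [:0,?P:] - smult (?P ^ k * \<gamma>0) ?B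
        = [:?P ^ r:] * ?B * (pcompose g [:0,?P:] - [:?P ^ (k - r) * \<gamma>0:])"
    proof -
      have pk: "?P ^ k = ?P ^ (k - r) * ?P ^ r" using kr1 by (metis power_add mult.commute)
      have "smult (?P ^ k * \<gamma>0) ?B = [:?P ^ r:] * ?B * [:?P ^ (k - r) * \<gamma>0:]"
        by (simp add: pk mult_ac)
      then show ?thesis by (simp add: algebra_simps)
    qed
    moreover have "[:?P ^ (k+1):] dvd [:?P ^ r:] * ?B * (pcompose g [:0,?P:] - [:?P ^ (k - r) * \<gamma>0:])"
    proof -
      have e1: "?P ^ (k+1) = ?P ^ r * ?P ^ (k - r + 1)" using kr1(1) by (metis power_add)
      have e2: "[:?P ^ (k+1):] = [:?P ^ r:] * [:?P ^ (k - r + 1):]" using e1 by (simp add: mult.commute)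
      have d1: "[:?P ^ r:] * [:?P ^ (k - r + 1):] dvd [:?P ^ r:] * (pcompose g [:0,?P:] - [:?P ^ (k - r) * \<gamma>0:])"
        by (rule mult_dvd_mono[OF dvd_refl gsub])
      have d2: "[:?P ^ r:] * [:?P ^ (k - r + 1):] dvd [:?P ^ r:] * (pcompose g [:0,?P:] - [:?P ^ (k - r) * \<gamma>0:]) * ?B"
        using d1 by (rule dvd_mult2)
      have e3: "[:?P ^ r:] * (pcompose g [:0,?P:] - [:?P ^ (k - r) * \<gamma>0:]) * ?B = [:?P ^ r:] * ?B * (pcompose g [:0,?P:] - [:?P ^ (k - r) * \<gamma>0:])"
        by (simp only: mult_ac)
      show ?thesis using d2 unfolding e2 e3 .
    qed
    ultimately show ?thesis by simp
  qed
  have "[:?P ^ (k+1):] dvd pcompose (fK p n a N) [:0,?P:] - smult (?P ^ k * \<gamma>0) ?B"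
    using dvd_add[OF c1 c2] comp by simp
  moreover have "N \<ge> k + 1" unfolding N_def by simp
  ultimately show ?thesis using g1 lb by blast
qed

lemma upper_struct:
  "zc k a \<and> (\<exists>\<gamma> \<beta>s. \<gamma> \<in> (if r = n then {1} else {0..<int p}) \<and> length \<beta>s = r \<and> set \<beta>s \<subseteq> {0..<int p} \<and>
     (\<forall>j<k. int (a j (k - j)) = coeff (smult \<gamma> (\<Prod>b\<leftarrow>\<beta>s. [:-b,1:])) j mod int p))"
proof -
  let ?P = "int p"
  obtain \<gamma>0 \<beta>s0 N where g1: "r = n \<longrightarrow> ?P dvd \<gamma>0 - 1" and lb: "length \<beta>s0 = r" and N: "N \<ge> k + 1"
    and dv: "[:?P ^ (k + 1):] dvd pcompose (fK p n a N) [:0, ?P:] - smult (?P ^ k * \<gamma>0) (\<Prod>b\<leftarrow>\<beta>s0. [:-b,1:])"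
    using upper_poly by blast
  let ?Cz = "\<Prod>b\<leftarrow>\<beta>s0. [:-b,1:]"
  have kn: "k \<le> n" using kdef by simp
  have dj: "(\<forall>i<k - j. a j i = 0) \<and> int (a j (k - j)) = (\<gamma>0 * coeff ?Cz j) mod ?P" if j: "j < k" for j
  proof -
    define e where "e = k - j"
    have jn: "j < n" using j kn by simp
    have "?P ^ (k+1) dvd coeff (pcompose (fK p n a N) [:0, ?P:] - smult (?P ^ k * \<gamma>0) ?Cz) j"
      using dv by (simp only: const_poly_dvd_iff)
    then have X: "?P ^ (k+1) dvd zp_trunc p (a j) N * ?P ^ j - ?P ^ k * \<gamma>0 * coeff ?Cz j"
      using jn by (simp add: coeff_fK_scaled)
    have E1: "?P ^ (k+1) = ?P ^ j * ?P ^ Suc e" using j unfolding e_def by (simp flip: power_add)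
    have E2: "zp_trunc p (a j) N * ?P ^ j - ?P ^ k * \<gamma>0 * coeff ?Cz j = ?P ^ j * (zp_trunc p (a j) N - ?P ^ e * (\<gamma>0 * coeff ?Cz j))"
      using j unfolding e_def by (simp add: algebra_simps flip: power_add)
    have "?P ^ j * ?P ^ Suc e dvd ?P ^ j * (zp_trunc p (a j) N - ?P ^ e * (\<gamma>0 * coeff ?Cz j))"
      using X unfolding E1 E2 .
    then have d: "?P ^ Suc e dvd zp_trunc p (a j) N - ?P ^ e * (\<gamma>0 * coeff ?Cz j)"
      using pge1 by (subst (asm) dvd_mult_cancel_left) auto
    have digs: "\<forall>i. a j i < p" using gd jn by (simp add: good_def)
    have "N \<ge> Suc e" using N unfolding e_def by simp
    from digits_from_cong[OF refl pge1 digs d this] show ?thesis unfolding e_def .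
  qed
  have zca: "zc k a" unfolding zc_def using dj by auto
  define \<gamma> where "\<gamma> = \<gamma>0 mod ?P"
  define \<beta>s where "\<beta>s = map (\<lambda>b. b mod ?P) \<beta>s0"
  let ?B = "\<Prod>b\<leftarrow>\<beta>s. [:-b,1:]"
  have c1: "[:?P:] dvd ?Cz - ?B"
    by (rule linprod_cong) (auto simp: \<beta>s_def mod_eq_dvd_iff[symmetric])
  have c2: "?P dvd \<gamma>0 - \<gamma>" by (simp add: \<gamma>_def mod_eq_dvd_iff[symmetric])
  have "smult \<gamma>0 ?Cz - smult \<gamma> ?B = smult \<gamma>0 (?Cz - ?B) + smult (\<gamma>0 - \<gamma>) ?B"
    by (simp add: algebra_simps smult_diff_right smult_diff_left)
  moreover have "[:?P:] dvd smult \<gamma>0 (?Cz - ?B)" using c1 by (simp add: const_poly_dvd_iff)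
  moreover have "[:?P:] dvd smult (\<gamma>0 - \<gamma>) ?B" using c2 by (simp add: const_poly_dvd_iff)
  ultimately have cc: "[:?P:] dvd smult \<gamma>0 ?Cz - smult \<gamma> ?B" by (metis dvd_add)
  have "\<forall>j<k. int (a j (k - j)) = coeff (smult \<gamma> ?B) j mod ?P"
  proof (intro allI impI)
    fix j assume j: "j < k"
    have "?P dvd coeff (smult \<gamma>0 ?Cz) j - coeff (smult \<gamma> ?B) j" using cc by (simp add: const_poly_dvd_iff)
    then have "coeff (smult \<gamma>0 ?Cz) j mod ?P = coeff (smult \<gamma> ?B) j mod ?P" by (simp add: mod_eq_dvd_iff)
    then show "int (a j (k - j)) = coeff (smult \<gamma> ?B) j mod ?P" using dj[OF j] by simp
  qed
  moreover have "\<gamma> \<in> (if r = n then {1} else {0..<?P})"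
  proof (cases "r = n")
    case True
    then have "\<gamma>0 mod ?P = 1 mod ?P" using g1 by (simp add: mod_eq_dvd_iff)
    then show ?thesis using True pge1 by (simp add: \<gamma>_def)
  next
    case False then show ?thesis using pge1 by (simp add: \<gamma>_def)
  qed
  moreover have "length \<beta>s = r" "set \<beta>s \<subseteq> {0..<?P}" using lb pge1 by (auto simp: \<beta>s_def)
  ultimately show ?thesis using zca by blast
qed

end

definition ctup :: "nat \<Rightarrow> nat \<Rightarrow> int poly \<Rightarrow> nat \<Rightarrow> nat" where
  "ctup p k F = restrict (\<lambda>j. nat (coeff F j mod int p)) {..<k}"

definition Slow :: "nat \<Rightarrow> nat \<Rightarrow> nat \<Rightarrow> nat \<Rightarrow> (nat \<Rightarrow> nat) set" where
  "Slow p n r k = (\<lambda>(\<gamma>, B). ctup p k (smult \<gamma> (\<Prod>b\<in>B. [:-b,1:]))) `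
     ((if r = n then {1} else {1..<int p}) \<times> {B. B \<subseteq> {0..<int p} \<and> card B = r})"

definition Sup :: "nat \<Rightarrow> nat \<Rightarrow> nat \<Rightarrow> nat \<Rightarrow> (nat \<Rightarrow> nat) set" where
  "Sup p n r k = (\<lambda>(\<gamma>, bs). ctup p k (smult \<gamma> (\<Prod>b\<leftarrow>bs. [:-b,1:]))) `
     ((if r = n then {1} else {0..<int p}) \<times> {bs. length bs = r \<and> set bs \<subseteq> {0..<int p}})"

lemma ctup_PiE: "p > 0 \<Longrightarrow> ctup p k F \<in> {..<k} \<rightarrow>\<^sub>E {..<p}"
  by (auto simp: ctup_def nat_less_iff)

lemma Slow_sub: "p > 0 \<Longrightarrow> Slow p n r k \<subseteq> {..<k} \<rightarrow>\<^sub>E {..<p}"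
  using ctup_PiE by (auto simp: Slow_def)

lemma Sup_sub: "p > 0 \<Longrightarrow> Sup p n r k \<subseteq> {..<k} \<rightarrow>\<^sub>E {..<p}"
  using ctup_PiE by (auto simp: Sup_def)

lemma finite_PiE_k: "finite ({..<k::nat} \<rightarrow>\<^sub>E {..<p::nat})"
  by (intro finite_PiE) auto

lemma ctup_eq_iff: "p > 0 \<Longrightarrow> ctup p k F = ctup p k G \<longleftrightarrow> (\<forall>j<k. coeff F j mod int p = coeff G j mod int p)"
proof -
  assume p: "p > 0"
  have "ctup p k F = ctup p k G \<longleftrightarrow> (\<forall>j<k. nat (coeff F j mod int p) = nat (coeff G j mod int p))"
    by (auto simp: ctup_def restrict_def fun_eq_iff)
  also have "\<dots> \<longleftrightarrow> (\<forall>j<k. coeff F j mod int p = coeff G j mod int p)"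
    using p by (auto simp: eq_nat_nat_iff)
  finally show ?thesis .
qed

lemma ctup_eq_iff': "p > 0 \<Longrightarrow> (\<forall>j<k. int (c j) = coeff F j mod int p) \<Longrightarrow> c \<in> {..<k} \<rightarrow>\<^sub>E UNIV \<Longrightarrow> c = ctup p k F"
  by (auto simp: ctup_def restrict_def fun_eq_iff PiE_def extensional_def)

context
  fixes p n r k :: nat
  assumes pp: "prime p" and rn: "r \<le> n" and rn2: "r = n \<or> r + 2 \<le> n" and kdef: "k = min (r + 1) n"
begin

lemma p1: "p > 1" using pp prime_gt_1_nat by blast

lemma Slow_inj: "inj_on (\<lambda>(\<gamma>, B). ctup p k (smult \<gamma> (\<Prod>b\<in>B. [:-b,1:])))
     ((if r = n then {1} else {1..<int p}) \<times> {B. B \<subseteq> {0..<int p} \<and> card B = r})"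
proof (rule inj_onI)
  fix x y
  assume xm: "x \<in> (if r = n then {1} else {1..<int p}) \<times> {B. B \<subseteq> {0..<int p} \<and> card B = r}"
    and ym: "y \<in> (if r = n then {1} else {1..<int p}) \<times> {B. B \<subseteq> {0..<int p} \<and> card B = r}"
    and exy: "(\<lambda>(\<gamma>, B). ctup p k (smult \<gamma> (\<Prod>b\<in>B. [:-b,1:]))) x = (\<lambda>(\<gamma>, B). ctup p k (smult \<gamma> (\<Prod>b\<in>B. [:-b,1:]))) y"
  obtain g1 B1 where x: "x = (g1, B1)" by (cases x)
  obtain g2 B2 where y: "y = (g2, B2)" by (cases y)
  have g1: "g1 \<in> (if r = n then {1} else {1..<int p})" and g2: "g2 \<in> (if r = n then {1} else {1..<int p})"
    and B1: "B1 \<subseteq> {0..<int p}" "card B1 = r" and B2: "B2 \<subseteq> {0..<int p}" "card B2 = r"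
    using xm ym x y by auto
  have e: "ctup p k (smult g1 (\<Prod>b\<in>B1. [:-b,1:])) = ctup p k (smult g2 (\<Prod>b\<in>B2. [:-b,1:]))"
    using exy x y by simp
  let ?F1 = "smult g1 (\<Prod>b\<in>B1. [:-b,1:])" and ?F2 = "smult g2 (\<Prod>b\<in>B2. [:-b,1:])"
  have f1: "finite B1" "finite B2" using B1 B2 finite_subset by auto
  have low: "\<forall>j<k. coeff ?F1 j mod int p = coeff ?F2 j mod int p" using e ctup_eq_iff p1 by simp
  have allc: "coeff ?F1 j mod int p = coeff ?F2 j mod int p" for j
  proof (cases "j < k")
    case True then show ?thesis using low by simp
  next
    case False
    show ?thesis
    proof (cases "r = n")
      case True
      then have "g1 = 1" "g2 = 1" "k = n" using g1 g2 kdef by auto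
      then show ?thesis using False lead_linprod[OF f1(1)] lead_linprod[OF f1(2)] coeff_linprod_big[OF f1(1), of j 1]
          coeff_linprod_big[OF f1(2), of j 1] B1 B2 True
        by (cases "j = n") auto
    next
      case False
      then have "r < j" using kdef rn \<open>\<not> j < k\<close> by auto
      then show ?thesis using coeff_linprod_big[OF f1(1), of j g1] coeff_linprod_big[OF f1(2), of j g2] B1 B2 by auto
    qed
  qed
  have dv: "[:int p:] dvd ?F1 - ?F2"
    unfolding const_poly_dvd_iff using allc by (simp add: mod_eq_dvd_iff)
  have g2u: "\<not> int p dvd g2" "\<not> int p dvd g1" using g1 g2 p1 by (auto split: if_splits simp: zdvd_not_zless)
  have sub: "B \<subseteq> B'" if dv': "[:int p:] dvd smult g (\<Prod>b\<in>B. [:-b,1:]) - smult g' (\<Prod>b\<in>B'. [:-b,1:])"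
    and B: "B \<subseteq> {0..<int p}" "finite B" and B': "B' \<subseteq> {0..<int p}" "finite B'" and gu: "\<not> int p dvd g'" for g g' B B'
  proof
    fix t assume t: "t \<in> B"
    have "int p dvd poly (smult g (\<Prod>b\<in>B. [:-b,1:])) t - poly (smult g' (\<Prod>b\<in>B'. [:-b,1:])) t"
      using dv' by (intro pcong_eval) auto
    moreover have "poly (smult g (\<Prod>b\<in>B. [:-b,1:])) t = 0" using t B by (simp add: poly_prod)
    ultimately have "int p dvd g' * (\<Prod>b\<in>B'. t - b)" by (auto simp add: poly_prod)
    moreover have "prime (int p)" using pp by simp
    ultimately obtain b where b: "b \<in> B'" "int p dvd t - b" using gu B' by (auto simp: prime_dvd_mult_iff prime_dvd_prod_iff)
    then have "t = b" using t B B' by (intro dvd_small_eq[of _ "int p"]) auto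
    then show "t \<in> B'" using b by simp
  qed
  have "B1 \<subseteq> B2" using sub[OF dv B1(1) f1(1) B2(1) f1(2) g2u(1)] .
  moreover have "[:int p:] dvd ?F2 - ?F1" using dv by (metis dvd_minus_iff minus_diff_eq)
  then have "B2 \<subseteq> B1" using sub[OF _ B2(1) f1(2) B1(1) f1(1) g2u(2)] by blast
  ultimately have BB: "B1 = B2" by blast
  have "g1 = g2"
  proof (cases "r = n")
    case True then show ?thesis using g1 g2 by simp
  next
    case False
    then have "r < k" using kdef rn rn2 by auto
    then have "coeff ?F1 r mod int p = coeff ?F2 r mod int p" using low by simp
    then have "g1 mod int p = g2 mod int p" using lead_linprod[OF f1(1)] lead_linprod[OF f1(2)] B1 B2 by simp
    then show ?thesis using g1 g2 False by simp
  qed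
  then show "x = y" using BB x y by simp
qed

lemma card_Slow: "card (Slow p n r k) = (if r = n then 1 else p - 1) * (p choose r)"
proof -
  have "card (Slow p n r k) = card ((if r = n then {1} else {1..<int p}) \<times> {B. B \<subseteq> {0..<int p} \<and> card B = r})"
    unfolding Slow_def by (rule card_image[OF Slow_inj])
  also have "\<dots> = (if r = n then 1 else p - 1) * (p choose r)"
    using p1 by (simp add: card_cartesian_product n_subsets nat_diff_distrib)
  finally show ?thesis .
qed

lemma card_img_lists:
  assumes rp: "r \<le> p"
  shows "card ((\<lambda>bs. ctup p k (smult g (\<Prod>b\<leftarrow>bs. [:-b,1:]))) ` {bs. length bs = r \<and> set bs \<subseteq> {0..<int p}})
     \<le> (p choose r) + (p ^ r - \<Prod>{p - r + 1..p})"
proof -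
  let ?A = "{0..<int p}"
  let ?f = "\<lambda>bs. ctup p k (smult g (\<Prod>b\<leftarrow>bs. [:-b,1:]))"
  let ?L = "{bs. length bs = r \<and> set bs \<subseteq> ?A}"
  let ?D = "{bs. length bs = r \<and> distinct bs \<and> set bs \<subseteq> ?A}"
  let ?Bs = "{B. B \<subseteq> ?A \<and> card B = r}"
  have finL: "finite ?L" using finite_lists_length_eq[of ?A r] by (simp add: conj_commute)
  have DL: "?D \<subseteq> ?L" by auto
  have cL: "card ?L = p ^ r" using card_lists_length_eq[of ?A r] by (simp add: conj_commute)
  have cD: "card ?D = \<Prod>{p - r + 1..p}" using card_lists_distinct_length_eq[of ?A r] rp by simp
  have cND: "card (?L - ?D) = p ^ r - \<Prod>{p - r + 1..p}" using card_Diff_subset[OF finite_subset[OF DL finL] DL] cL cD by simp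
  have "?f ` ?L = ?f ` ?D \<union> ?f ` (?L - ?D)" by auto
  moreover have sD: "?f ` ?D \<subseteq> (\<lambda>B. ctup p k (smult g (\<Prod>b\<in>B. [:-b,1:]))) ` ?Bs"
  proof
    fix c assume "c \<in> ?f ` ?D"
    then obtain bs where bs: "bs \<in> ?D" "c = ?f bs" by blast
    have "(\<Prod>b\<leftarrow>bs. [:-b,1:]) = (\<Prod>b\<in>set bs. [:-b,1::int:])" using bs by (simp add: prod.distinct_set_conv_list)
    moreover have "set bs \<in> ?Bs" using bs by (auto simp: distinct_card)
    ultimately show "c \<in> (\<lambda>B. ctup p k (smult g (\<Prod>b\<in>B. [:-b,1:]))) ` ?Bs" using bs by auto
  qed
  ultimately have c1: "card (?f ` ?L) \<le> card (?f ` ?D) + card (?f ` (?L - ?D))"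
    by (simp add: card_Un_le)
  have c2: "card (?f ` ?D) \<le> card ((\<lambda>B. ctup p k (smult g (\<Prod>b\<in>B. [:-b,1:]))) ` ?Bs)"
    by (rule card_mono[OF _ sD]) simp
  have c3: "card ((\<lambda>B. ctup p k (smult g (\<Prod>b\<in>B. [:-b,1:]))) ` ?Bs) \<le> card ?Bs"
    by (rule card_image_le) simp
  have c4: "card (?f ` (?L - ?D)) \<le> card (?L - ?D)" by (rule card_image_le) (use finL in auto)
  have c5: "card ?Bs = p choose r" by (simp add: n_subsets)
  show ?thesis using c1 c2 c3 c4 c5 cND by linarith
qed

lemma card_Sup_le:
  assumes rp: "r \<le> p"
  shows "card (Sup p n r k) \<le> (if r = n then 1 else p) * ((p choose r) + (p ^ r - \<Prod>{p - r + 1..p}))"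
proof -
  let ?G = "if r = n then {1} else {0..<int p}"
  let ?L = "{bs. length bs = r \<and> set bs \<subseteq> {0..<int p}}"
  let ?M = "(p choose r) + (p ^ r - \<Prod>{p - r + 1..p})"
  have GL: "?G \<times> ?L = (\<Union>g\<in>?G. Pair g ` ?L)" by auto
  have "Sup p n r k = (\<Union>g\<in>?G. (\<lambda>bs. ctup p k (smult g (\<Prod>b\<leftarrow>bs. [:-b,1:]))) ` ?L)"
    unfolding Sup_def GL image_UN image_image by simp
  then have "card (Sup p n r k) \<le> (\<Sum>g\<in>?G. card ((\<lambda>bs. ctup p k (smult g (\<Prod>b\<leftarrow>bs. [:-b,1:]))) ` ?L))"
    by (simp add: card_UN_le)
  also have "\<dots> \<le> (\<Sum>g\<in>?G. ?M)" by (intro sum_mono card_img_lists rp)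
  also have "\<dots> = (if r = n then 1 else p) * ?M" by simp
  finally show ?thesis .
qed

end

lemma ffp_bounds:
  assumes "r \<le> p"
  shows "(p - r) ^ r \<le> \<Prod>{p - r + 1..p}" "\<Prod>{p - r + 1..p} \<le> p ^ r"
proof -
  have c: "card {p - r + 1..p} = r" using assms by simp
  have "(\<Prod>x\<in>{p - r + 1..p}. (p - r)) \<le> (\<Prod>x\<in>{p - r + 1..p}. x)" by (intro prod_mono) auto
  then show "(p - r) ^ r \<le> \<Prod>{p - r + 1..p}" using c by simp
  have "(\<Prod>x\<in>{p - r + 1..p}. x) \<le> (\<Prod>x\<in>{p - r + 1..p}. p)" by (intro prod_mono) auto
  then show "\<Prod>{p - r + 1..p} \<le> p ^ r" using c by simp
qed

lemma fact_binom_ffp: "r \<le> p \<Longrightarrow> fact r * (p choose r) = \<Prod>{p - r + 1..p}"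
proof -
  assume rp: "r \<le> p"
  have "fact r * fact (p - r) * (p choose r) = (fact p :: nat)" using binomial_fact_lemma[OF rp] .
  then have "fact p div fact (p - r) = fact r * (p choose r)"
    by (metis fact_nonzero nonzero_mult_div_cancel_right mult.commute mult.assoc)
  moreover have "fact p div fact (p - r) = \<Prod>{p - r + 1..p}" using fact_div_fact[of "p - r" p] by simp
  ultimately show ?thesis by simp
qed

lemma lim_ffp: "(\<lambda>p. real (\<Prod>{p - r + 1..p}) / real p ^ r) \<longlonglongrightarrow> 1"
proof (rule tendsto_sandwich[of "\<lambda>p. (1 - real r / real p) ^ r" _ _ "\<lambda>p. 1"])
  show "\<forall>\<^sub>F p in sequentially. (1 - real r / real p) ^ r \<le> real (\<Prod>{p - r + 1..p}) / real p ^ r"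
    using eventually_ge_at_top[of "Suc r"]
  proof eventually_elim
    case (elim p)
    then have rp: "r \<le> p" and p0: "p > 0" by auto
    have "(1 - real r / real p) ^ r = real ((p - r) ^ r) / real p ^ r"
      using rp p0 by (simp add: of_nat_diff field_simps power_divide)
    also have "\<dots> \<le> real (\<Prod>{p - r + 1..p}) / real p ^ r"
      using ffp_bounds(1)[OF rp] by (intro divide_right_mono) (simp_all only: of_nat_le_iff, auto)
    finally show ?case .
  qed
  show "\<forall>\<^sub>F p in sequentially. real (\<Prod>{p - r + 1..p}) / real p ^ r \<le> 1"
    using eventually_ge_at_top[of "Suc r"]
  proof eventually_elim
    case (elim p)
    then have rp: "r \<le> p" and p0: "p > 0" by auto
    have "real (\<Prod>{p - r + 1..p}) \<le> real p ^ r" using ffp_bounds(2)[OF rp] by (metis of_nat_le_iff of_nat_power)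
    then show ?case using p0 by simp
  qed
  have "(\<lambda>p. 1 - real r / real p) \<longlonglongrightarrow> 1 - 0"
    by (intro tendsto_diff tendsto_const tendsto_divide_0[OF tendsto_const] filterlim_at_top_imp_at_infinity[OF filterlim_real_sequentially])
  then show "(\<lambda>p. (1 - real r / real p) ^ r) \<longlonglongrightarrow> 1"
    using tendsto_power[of "\<lambda>p. 1 - real r / real p" 1 sequentially r] by simp
qed simp

lemma lim_binom: "(\<lambda>p. real (p choose r) / real p ^ r) \<longlonglongrightarrow> 1 / fact r"
proof -
  have "(\<lambda>p. (real (\<Prod>{p - r + 1..p}) / real p ^ r) / fact r) \<longlonglongrightarrow> 1 / fact r"
    by (intro tendsto_divide lim_ffp tendsto_const) simp
  moreover have "\<forall>\<^sub>F p in sequentially. (real (\<Prod>{p - r + 1..p}) / real p ^ r) / fact r = real (p choose r) / real p ^ r"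
    using eventually_ge_at_top[of r]
  proof eventually_elim
    case (elim p)
    have "real (\<Prod>{p - r + 1..p}) = fact r * real (p choose r)"
      using fact_binom_ffp[OF elim] by (metis of_nat_fact of_nat_mult)
    then show ?case by simp
  qed
  ultimately show ?thesis by (rule Lim_transform_eventually)
qed

abbreviation Mi :: "nat \<Rightarrow> nat \<Rightarrow> nat measure" where
  "Mi p \<equiv> (\<lambda>j. if j = 0 then return (count_space UNIV) 0 else digit_measure p)"

lemma Mi_prob: "prob_space (Mi p j)"
  by (auto simp: digit_measure_def prob_space_measure_pmf intro: prob_space_return)

lemma dm_space[simp]: "space (digit_measure p) = UNIV" by (simp add: digit_measure_def)
lemma dm_sets[simp]: "sets (digit_measure p) = UNIV" by (simp add: digit_measure_def)
lemma Mi_space[simp]: "space (Mi p j) = UNIV" by simp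
lemma Mi_sets[simp]: "sets (Mi p j) = UNIV" by simp

lemma ppsI: "(\<And>i. prob_space (M i)) \<Longrightarrow> product_prob_space M"
  unfolding product_prob_space_def product_prob_space_axioms_def product_sigma_finite_def
  using prob_space_imp_sigma_finite by blast

interpretation Mprod: product_prob_space "Mi p" UNIV for p
  by (rule ppsI) (rule Mi_prob)

lemma Z_space[simp]: "space (pZp_haar p) = UNIV"
  by (simp add: pZp_haar_def space_PiM)

lemma Z_prob: "prob_space (pZp_haar p)"
  unfolding pZp_haar_def by (rule prob_space_PiM) (rule Mi_prob)

interpretation Zprod: product_prob_space "\<lambda>_. pZp_haar p" I for p I
  by (rule ppsI) (rule Z_prob)

lemma Mc_prob: "prob_space (coeff_measure p n)"
  unfolding coeff_measure_def by (rule prob_space_PiM) (rule Z_prob)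

lemma Mc_space: "space (coeff_measure p n) = {..<n} \<rightarrow>\<^sub>E UNIV"
  by (simp add: coeff_measure_def space_PiM)

lemma digit_single: "p > 0 \<Longrightarrow> v < p \<Longrightarrow> emeasure (digit_measure p) {v} = ennreal (1 / real p)"
  unfolding digit_measure_def emeasure_pmf_single by (subst pmf_of_set) auto

definition Wset :: "nat \<Rightarrow> nat \<Rightarrow> nat \<Rightarrow> (nat \<Rightarrow> nat) set" where
  "Wset k j v = {z. (\<forall>i. 1 \<le> i \<and> i < k - j \<longrightarrow> z i = 0) \<and> z (k - j) = v}"

lemma Wset_emb: "j < k \<Longrightarrow> Wset k j v = prod_emb UNIV (Mi p) {1..k - j} (\<Pi>\<^sub>E i\<in>{1..k - j}. if i = k - j then {v} else {0})"
proof -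
  assume jk: "j < k"
  show ?thesis
  proof (intro set_eqI iffI)
    fix z assume "z \<in> Wset k j v"
    then show "z \<in> prod_emb UNIV (Mi p) {1..k - j} (\<Pi>\<^sub>E i\<in>{1..k - j}. if i = k - j then {v} else {0})"
      by (auto simp: Wset_def prod_emb_def space_PiM PiE_iff)
  next
    fix z assume z: "z \<in> prod_emb UNIV (Mi p) {1..k - j} (\<Pi>\<^sub>E i\<in>{1..k - j}. if i = k - j then {v} else {0})"
    then have zz: "\<And>i. i \<in> {1..k - j} \<Longrightarrow> z i \<in> (if i = k - j then {v} else {0})"
      by (auto simp: prod_emb_def PiE_iff)
    have "z i = 0" if "1 \<le> i" "i < k - j" for i using zz[of i] that by auto
    moreover have "z (k - j) = v" using zz[of "k - j"] jk by auto
    ultimately show "z \<in> Wset k j v" by (simp add: Wset_def)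
  qed
qed

lemma Wset_sets: "j < k \<Longrightarrow> Wset k j v \<in> sets (pZp_haar p)"
  unfolding pZp_haar_def by (subst Wset_emb[of j k v p]) (auto intro!: sets_PiM_I)

lemma Wset_emeasure:
  assumes "p > 0" "v < p" "j < k"
  shows "emeasure (pZp_haar p) (Wset k j v) = ennreal ((1 / real p) ^ (k - j))"
proof -
  have "emeasure (pZp_haar p) (Wset k j v) = (\<Prod>i\<in>{1..k - j}. emeasure (Mi p i) (if i = k - j then {v} else {0}))"
  proof -
    have "emeasure (PiM UNIV (Mi p)) (prod_emb UNIV (Mi p) {1..k - j} (\<Pi>\<^sub>E i\<in>{1..k - j}. if i = k - j then {v} else {0}))
       = (\<Prod>i\<in>{1..k - j}. emeasure (Mi p i) (if i = k - j then {v} else {0}))"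
      by (rule Mprod.emeasure_PiM_emb) auto
    then show ?thesis unfolding pZp_haar_def using Wset_emb[OF assms(3), of v p] by simp
  qed
  also have "\<dots> = (\<Prod>i\<in>{1..k - j}. ennreal (1 / real p))"
    using assms by (intro prod.cong refl) (auto simp: digit_single)
  also have "\<dots> = ennreal ((1 / real p) ^ (k - j))" by (simp add: ennreal_power)
  finally show ?thesis .
qed

lemma Z_UNIV_sets: "UNIV \<in> sets (pZp_haar p)"
  using sets.top[of "pZp_haar p"] by simp

definition Ev :: "nat \<Rightarrow> nat \<Rightarrow> (nat \<Rightarrow> nat) set \<Rightarrow> (nat \<Rightarrow> nat \<Rightarrow> nat) set" where
  "Ev n k S = (\<Union>c\<in>S. \<Pi>\<^sub>E j\<in>{..<n}. (if j < k then Wset k j (c j) else UNIV))"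

lemma piece_sets: "(\<Pi>\<^sub>E j\<in>{..<n}. (if j < k then Wset k j (c j) else UNIV)) \<in> sets (coeff_measure p n)"
  unfolding coeff_measure_def by (rule sets_PiM_I_finite) (auto intro: Wset_sets Z_UNIV_sets)

lemma Ev_sets: "finite S \<Longrightarrow> Ev n k S \<in> sets (coeff_measure p n)"
  unfolding Ev_def by (intro sets.finite_UN piece_sets)

lemma piece_emeasure:
  assumes p: "p > 0" and c: "c \<in> {..<k} \<rightarrow>\<^sub>E {..<p}" and kn: "k \<le> n"
  shows "emeasure (coeff_measure p n) (\<Pi>\<^sub>E j\<in>{..<n}. (if j < k then Wset k j (c j) else UNIV))
     = ennreal ((1 / real p) ^ (\<Sum>j<k. k - j))"
proof -
  have "emeasure (coeff_measure p n) (\<Pi>\<^sub>E j\<in>{..<n}. (if j < k then Wset k j (c j) else UNIV))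
     = (\<Prod>j<n. emeasure (pZp_haar p) (if j < k then Wset k j (c j) else UNIV))"
    unfolding coeff_measure_def
    by (rule Zprod.emeasure_PiM) (auto intro: Wset_sets Z_UNIV_sets)
  also have "\<dots> = (\<Prod>j<n. (if j < k then ennreal ((1 / real p) ^ (k - j)) else 1))"
  proof (intro prod.cong refl)
    fix j assume "j \<in> {..<n}"
    show "emeasure (pZp_haar p) (if j < k then Wset k j (c j) else UNIV) = (if j < k then ennreal ((1 / real p) ^ (k - j)) else 1)"
    proof (cases "j < k")
      case True
      then have "c j < p" using c by auto
      then show ?thesis using True Wset_emeasure[OF p] by simp
    next
      case False
      then show ?thesis using prob_space.emeasure_space_1[OF Z_prob, of p] by simp
    qed
  qed
  also have "\<dots> = (\<Prod>j<k. ennreal ((1 / real p) ^ (k - j)))"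
  proof -
    have "(\<Prod>j<n. (if j < k then ennreal ((1 / real p) ^ (k - j)) else 1)) = (\<Prod>j\<in>{..<k}. (if j < k then ennreal ((1 / real p) ^ (k - j)) else 1))"
      using kn by (intro prod.mono_neutral_right) auto
    then show ?thesis by simp
  qed
  also have "\<dots> = ennreal (\<Prod>j<k. (1 / real p) ^ (k - j))" by (simp add: prod_ennreal)
  also have "(\<Prod>j<k. (1 / real p) ^ (k - j)) = (1 / real p) ^ (\<Sum>j<k. k - j)" by (simp add: power_sum)
  finally show ?thesis .
qed

lemma Ev_measure:
  assumes p: "p > 0" and S: "S \<subseteq> {..<k} \<rightarrow>\<^sub>E {..<p}" and kn: "k \<le> n"
  shows "measure (coeff_measure p n) (Ev n k S) = real (card S) * (1 / real p) ^ (\<Sum>j<k. k - j)"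
proof -
  interpret F: prob_space "coeff_measure p n" by (rule Mc_prob)
  have finS: "finite S" by (rule finite_subset[OF S]) (intro finite_PiE; simp)
  let ?A = "\<lambda>c. \<Pi>\<^sub>E j\<in>{..<n}. (if j < k then Wset k j (c j) else UNIV)"
  have disj: "disjoint_family_on ?A S"
    unfolding disjoint_family_on_def
  proof (intro ballI impI)
    fix c c' assume c: "c \<in> S" and c': "c' \<in> S" and ne: "c \<noteq> c'"
    obtain j where j0: "c j \<noteq> c' j" using ne by (auto simp: fun_eq_iff)
    have "j < k"
    proof (rule ccontr)
      assume "\<not> j < k"
      then have "c j = undefined" "c' j = undefined" using c c' S by (auto simp: PiE_def extensional_def)
      then show False using j0 by simp
    qed
    then have j: "j < k" "c j \<noteq> c' j" using j0 by auto
    show "?A c \<inter> ?A c' = {}"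
    proof (rule ccontr)
      assume "?A c \<inter> ?A c' \<noteq> {}"
      then obtain a where a1: "a \<in> ?A c" and a2: "a \<in> ?A c'" by blast
      have jn: "j \<in> {..<n}" using j kn by simp
      have "a j \<in> (if j < k then Wset k j (c j) else UNIV)" using PiE_mem[OF a1 jn] .
      moreover have "a j \<in> (if j < k then Wset k j (c' j) else UNIV)" using PiE_mem[OF a2 jn] .
      ultimately have "a j \<in> Wset k j (c j)" "a j \<in> Wset k j (c' j)" using j by auto
      then show False using j by (simp add: Wset_def)
    qed
  qed
  have "measure (coeff_measure p n) (Ev n k S) = (\<Sum>c\<in>S. measure (coeff_measure p n) (?A c))"
    unfolding Ev_def by (rule F.finite_measure_finite_Union[OF finS _ disj]) (auto intro: piece_sets)
  also have "\<dots> = (\<Sum>c\<in>S. (1 / real p) ^ (\<Sum>j<k. k - j))"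
  proof (intro sum.cong refl)
    fix c assume "c \<in> S"
    then have "emeasure (coeff_measure p n) (?A c) = ennreal ((1 / real p) ^ (\<Sum>j<k. k - j))"
      using piece_emeasure[OF p _ kn] S by blast
    then show "measure (coeff_measure p n) (?A c) = (1 / real p) ^ (\<Sum>j<k. k - j)"
      by (simp add: F.emeasure_eq_measure)
  qed
  finally show ?thesis by simp
qed

lemma AE_good:
  assumes p: "p > 0"
  shows "AE a in coeff_measure p n. good p n a"
proof -
  have z: "AE z in pZp_haar p. z 0 = 0 \<and> (\<forall>i. z i < p)"
  proof -
    have "AE z in pZp_haar p. z i \<in> (if i = 0 then {0} else {..<p})" for i
    proof -
      have "AE x in Mi p i. x \<in> (if i = 0 then {0} else {..<p})"
      proof (cases "i = 0")
        case True then show ?thesis by (simp add: AE_return)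
      next
        case False
        have "AE x in digit_measure p. x < p" unfolding digit_measure_def using p by (subst AE_measure_pmf_iff, subst set_pmf_of_set) auto
        then show ?thesis using False by simp
      qed
      then show ?thesis unfolding pZp_haar_def by (rule Mprod.AE_component[rotated]) simp
    qed
    then have "AE z in pZp_haar p. \<forall>i. z i \<in> (if i = 0 then {0} else {..<p})" by (simp add: AE_all_countable)
    then show ?thesis
    proof (rule AE_mp, intro AE_I2 impI)
      fix z assume z: "\<forall>i. z i \<in> (if i = 0 then {0} else {..<p})"
      have "z i < p" for i using z[rule_format, of i] p by (cases "i = 0") auto
      moreover have "z 0 = 0" using z[rule_format, of 0] by simp
      ultimately show "z 0 = 0 \<and> (\<forall>i. z i < p)" by blast
    qed
  qed
  have "AE a in coeff_measure p n. \<forall>j\<in>{..<n}. a j 0 = 0 \<and> (\<forall>i. a j i < p)"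
    unfolding coeff_measure_def
  proof (rule AE_finite_allI)
    fix j assume j: "j \<in> {..<n}"
    show "AE a in PiM {..<n} (\<lambda>_. pZp_haar p). a j 0 = 0 \<and> (\<forall>i. a j i < p)"
      by (rule Zprod.AE_component[OF j z])
  qed simp
  then show ?thesis unfolding good_def by (simp add: lessThan_iff Ball_def)
qed

definition dl :: "nat \<Rightarrow> nat \<Rightarrow> (nat \<Rightarrow> nat \<Rightarrow> nat) \<Rightarrow> nat list" where
  "dl n m a = map (\<lambda>q. a (q div m) (q mod m)) [0..<n * m]"

lemma digit_sets:
  assumes "j < n"
  shows "{a \<in> space (coeff_measure p n). a j i = v} \<in> sets (coeff_measure p n)"
proof -
  have m1: "(\<lambda>a. a j) \<in> measurable (coeff_measure p n) (pZp_haar p)"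
    unfolding coeff_measure_def using assms by (intro measurable_component_singleton) simp
  have m2: "(\<lambda>z. z i) \<in> measurable (pZp_haar p) (Mi p i)"
    unfolding pZp_haar_def by (intro measurable_component_singleton) simp
  have "(\<lambda>a. a j i) \<in> measurable (coeff_measure p n) (Mi p i)" using measurable_comp[OF m1 m2] by (simp add: o_def)
  from measurable_sets[OF this, of "{v}"] show ?thesis by (simp add: vimage_def Int_def conj_commute)
qed

lemma dl_measurable: "dl n m \<in> measurable (coeff_measure p n) (count_space UNIV)"
proof (subst measurable_count_space_eq2_countable, intro conjI ballI)
  show "dl n m \<in> space (coeff_measure p n) \<rightarrow> UNIV" by simp
  fix l :: "nat list"
  show "dl n m -` {l} \<inter> space (coeff_measure p n) \<in> sets (coeff_measure p n)"
  proof (cases "length l = n * m")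
    case False
    then have "dl n m -` {l} \<inter> space (coeff_measure p n) = {}" by (auto simp: dl_def)
    then show ?thesis by simp
  next
    case True
    have eq: "dl n m -` {l} \<inter> space (coeff_measure p n) =
        {a \<in> space (coeff_measure p n). \<forall>q\<in>{..<n*m}. a (q div m) (q mod m) = l ! q}"
      using True by (auto simp: dl_def list_eq_iff_nth_eq)
    have qd: "q div m < n" if "q < n * m" for q using that by (metis less_mult_imp_div_less mult.commute)
    have "Measurable.pred (coeff_measure p n) (\<lambda>a. \<forall>q\<in>{..<n*m}. a (q div m) (q mod m) = l ! q)"
    proof (rule pred_intros_finite(3))
      fix q assume "q \<in> {..<n*m}"
      then show "Measurable.pred (coeff_measure p n) (\<lambda>a. a (q div m) (q mod m) = l ! q)"
        unfolding pred_def using qd by (intro digit_sets) auto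
    qed simp
    then show ?thesis unfolding eq pred_def .
  qed
qed

lemma pred_dl: "Measurable.pred (coeff_measure p n) (\<lambda>a. (Q :: nat list \<Rightarrow> bool) (dl n m a))"
proof -
  have "{a \<in> space (coeff_measure p n). Q (dl n m a)} = dl n m -` {l. Q l} \<inter> space (coeff_measure p n)" by auto
  then have "{a \<in> space (coeff_measure p n). Q (dl n m a)} \<in> sets (coeff_measure p n)"
    using measurable_sets[OF dl_measurable, of "{l. Q l}"] by simp
  then show ?thesis by (simp add: pred_def)
qed

lemma dl_nth: "j < n \<Longrightarrow> i < m \<Longrightarrow> dl n m a ! (j * m + i) = a j i"
proof -
  assume j: "j < n" and i: "i < m"
  have lt: "j * m + i < n * m"
  proof -
    have "j * m + i < j * m + m" using i by simp
    also have "\<dots> = Suc j * m" by simp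
    also have "\<dots> \<le> n * m" using j by (intro mult_right_mono) auto
    finally show ?thesis .
  qed
  then show ?thesis using i by (simp add: dl_def)
qed

definition Phi :: "nat \<Rightarrow> nat \<Rightarrow> nat \<Rightarrow> int \<Rightarrow> nat list \<Rightarrow> int" where
  "Phi p n m t l = (\<Sum>j<n. (\<Sum>i<m. int (l ! (j * m + i)) * int p ^ i) * t ^ j) + t ^ n"

lemma poly_fK_Phi: "poly (fK p n a m) t = Phi p n m t (dl n m a)"
  unfolding poly_fK Phi_def zp_trunc_def by (intro arg_cong2[where f="(+)"] sum.cong refl) (simp_all add: dl_nth)

definition ar :: "nat \<Rightarrow> nat \<Rightarrow> (nat \<Rightarrow> nat \<Rightarrow> nat) \<Rightarrow> nat \<Rightarrow> int \<Rightarrow> bool" where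
  "ar p n a m t \<longleftrightarrow> 0 \<le> t \<and> t < int p ^ m \<and> int p ^ m dvd poly (fK p n a m) t"

definition ext :: "nat \<Rightarrow> nat \<Rightarrow> (nat \<Rightarrow> nat \<Rightarrow> nat) \<Rightarrow> nat \<Rightarrow> int \<Rightarrow> bool" where
  "ext p n a D t \<longleftrightarrow> (\<forall>m\<ge>D. \<exists>t'. ar p n a m t' \<and> t' mod int p ^ D = t)"

lemma pred_ext: "Measurable.pred (coeff_measure p n) (\<lambda>a. ext p n a D t)"
proof -
  have e: "ext p n a D t \<longleftrightarrow> (\<forall>m. D \<le> m \<longrightarrow> (\<exists>t'\<in>{0..<int p ^ m}. (int p ^ m dvd Phi p n m t' (dl n m a)) \<and> t' mod int p ^ D = t))" for a
    unfolding ext_def ar_def poly_fK_Phi by (auto simp: Bex_def)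
  show ?thesis unfolding e
    by (intro pred_intros_countable pred_intros_imp' pred_intros_finite pred_dl)
qed

lemma mod_pow_Suc: "(a::int) mod (int p ^ Suc D) = int p ^ D * (a div int p ^ D mod int p) + a mod int p ^ D"
  using mod_mult2_eq'[of a "p ^ D" p] by (simp add: mult.commute)

lemma ar_down:
  assumes "ar p n a m t" "m' \<le> m" "p > 0"
  shows "ar p n a m' (t mod int p ^ m')"
proof -
  have d1: "int p ^ m' dvd poly (fK p n a m) t"
    using assms(1,2) unfolding ar_def by (meson dvd_trans le_imp_power_dvd)
  have "int p ^ m' dvd poly (fK p n a m) t - poly (fK p n a m') (t mod int p ^ m')"
    using assms(2) by (intro pcong_eval fK_cong) (simp_all add: mod_eq_dvd_iff[symmetric])
  then have "int p ^ m' dvd poly (fK p n a m') (t mod int p ^ m')" using d1 by (rule dvd_diff_cancel[rotated])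
  then show ?thesis using assms(3) by (simp add: ar_def)
qed

lemma root_ext:
  assumes x: "is_zp_root p n a x"
  shows "ext p n a D (zp_trunc p x D)"
  unfolding ext_def
proof (intro allI impI)
  fix m assume m: "D \<le> m"
  have dig: "\<forall>i. x i < p" using x by (simp add: is_zp_root_def)
  have "ar p n a m (zp_trunc p x m)"
    using x zp_trunc_nonneg zp_trunc_less[OF dig] unfolding ar_def is_zp_root_fK by auto
  moreover have "zp_trunc p x m mod int p ^ D = zp_trunc p x D" using zp_trunc_mod[OF dig m] .
  ultimately show "\<exists>t'. ar p n a m t' \<and> t' mod int p ^ D = zp_trunc p x D" by blast
qed

lemma ext_step:
  assumes p: "p > 0" and e: "ext p n a D t" and t: "0 \<le> t" "t < int p ^ D"
  shows "\<exists>d. 0 \<le> d \<and> d < int p \<and> ext p n a (Suc D) (t + int p ^ D * d)"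
proof (rule ccontr)
  assume H: "\<not> ?thesis"
  let ?Q = "\<lambda>d m. m \<ge> Suc D \<and> (\<forall>t'. ar p n a m t' \<longrightarrow> t' mod int p ^ Suc D \<noteq> t + int p ^ D * d)"
  have ex: "\<exists>m. ?Q d m" if "0 \<le> d" "d < int p" for d
    using H that unfolding ext_def by auto
  define md where "md = (\<lambda>d. SOME m. ?Q d m)"
  have mdQ: "?Q d (md d)" if "0 \<le> d" "d < int p" for d unfolding md_def by (rule someI_ex[OF ex[OF that]])
  define M where "M = Max (md ` {0..<int p})"
  have fin: "finite (md ` {0..<int p})" by simp
  have mdM: "md d \<le> M" if "0 \<le> d" "d < int p" for d unfolding M_def using that by (intro Max_ge fin) auto
  have "Suc D \<le> M" using mdQ[of 0] mdM[of 0] p by auto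
  then have "D \<le> M" by simp
  then obtain t' where t': "ar p n a M t'" "t' mod int p ^ D = t" using e unfolding ext_def by blast
  define d where "d = (t' div int p ^ D) mod int p"
  have d: "0 \<le> d" "d < int p" using p by (auto simp: d_def)
  have tm: "t' mod int p ^ Suc D = t + int p ^ D * d" using mod_pow_Suc[of t' p D] t'(2) by (simp add: d_def)
  have "ar p n a (md d) (t' mod int p ^ md d)" using ar_down[OF t'(1) mdM[OF d] p] .
  moreover have "(t' mod int p ^ md d) mod int p ^ Suc D = t + int p ^ D * d"
  proof -
    have "int p ^ Suc D dvd int p ^ md d" using mdQ[OF d] by (intro le_imp_power_dvd) simp
    then have "(t' mod int p ^ md d) mod int p ^ Suc D = t' mod int p ^ Suc D" by (rule mod_mod_cancel)
    then show ?thesis using tm by simp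
  qed
  ultimately show False using mdQ[OF d] by blast
qed

lemma digits_of_seq:
  assumes p: "p > 0" and U: "\<And>m. 0 \<le> U m \<and> U m < int p ^ m" and C: "\<And>m m'. m \<le> m' \<Longrightarrow> U m' mod int p ^ m = U m"
  shows "zp_trunc p (\<lambda>i. nat ((U (Suc i) div int p ^ i) mod int p)) m = U m"
    and "nat ((U (Suc i) div int p ^ i) mod int p) < p"
proof -
  show "zp_trunc p (\<lambda>i. nat ((U (Suc i) div int p ^ i) mod int p)) m = U m"
  proof (induct m)
    case 0 then show ?case using U[of 0] by simp
  next
    case (Suc m)
    have "U (Suc m) = U (Suc m) mod int p ^ Suc m" using U[of "Suc m"] by simp
    also have "\<dots> = int p ^ m * (U (Suc m) div int p ^ m mod int p) + U (Suc m) mod int p ^ m" by (rule mod_pow_Suc)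
    also have "U (Suc m) mod int p ^ m = U m" using C[of m "Suc m"] by simp
    finally show ?case using Suc p by (simp add: zp_trunc_Suc mult.commute)
  qed
  show "nat ((U (Suc i) div int p ^ i) mod int p) < p" using p by (simp add: nat_less_iff)
qed

definition kstep :: "nat \<Rightarrow> nat \<Rightarrow> (nat \<Rightarrow> nat \<Rightarrow> nat) \<Rightarrow> nat \<Rightarrow> int \<Rightarrow> nat \<Rightarrow> int" where
  "kstep p n a D T j = (SOME d. 0 \<le> d \<and> d < int p \<and> ext p n a (Suc (D + j)) (T + int p ^ (D + j) * d))"

primrec Tseq :: "nat \<Rightarrow> nat \<Rightarrow> (nat \<Rightarrow> nat \<Rightarrow> nat) \<Rightarrow> nat \<Rightarrow> int \<Rightarrow> nat \<Rightarrow> int" where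
  "Tseq p n a D t 0 = t"
| "Tseq p n a D t (Suc j) = Tseq p n a D t j + int p ^ (D + j) * kstep p n a D (Tseq p n a D t j) j"

lemma Tseq_inv:
  assumes p: "p > 0" and e: "ext p n a D t" and t: "0 \<le> t" "t < int p ^ D"
  shows "ext p n a (D + j) (Tseq p n a D t j) \<and> 0 \<le> Tseq p n a D t j \<and> Tseq p n a D t j < int p ^ (D + j)
     \<and> 0 \<le> kstep p n a D (Tseq p n a D t j) j \<and> kstep p n a D (Tseq p n a D t j) j < int p"
proof (induct j)
  case 0
  have ex: "\<exists>d. 0 \<le> d \<and> d < int p \<and> ext p n a (Suc (D + 0)) (t + int p ^ (D + 0) * d)"
    using ext_step[OF p e t] by simp
  show ?case using e t someI_ex[OF ex] by (simp add: kstep_def)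
next
  case (Suc j)
  let ?T = "Tseq p n a D t j" and ?d = "kstep p n a D (Tseq p n a D t j) j"
  have ex: "\<exists>d. 0 \<le> d \<and> d < int p \<and> ext p n a (Suc (D + j)) (?T + int p ^ (D + j) * d)"
    using ext_step[OF p, of n a "D + j" ?T] Suc by auto
  have d: "0 \<le> ?d \<and> ?d < int p \<and> ext p n a (Suc (D + j)) (?T + int p ^ (D + j) * ?d)"
    unfolding kstep_def by (rule someI_ex[OF ex])
  have e': "ext p n a (D + Suc j) (Tseq p n a D t (Suc j))" using d by simp
  have lo: "0 \<le> Tseq p n a D t (Suc j)" using d Suc by simp
  have "int p ^ (D + j) * ?d \<le> int p ^ (D + j) * (int p - 1)" using d by (intro mult_left_mono) auto
  then have hi: "Tseq p n a D t (Suc j) < int p ^ (D + Suc j)" using Suc by (simp add: algebra_simps)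
  have ex2: "\<exists>d. 0 \<le> d \<and> d < int p \<and> ext p n a (Suc (D + Suc j)) (Tseq p n a D t (Suc j) + int p ^ (D + Suc j) * d)"
    using ext_step[OF p e'] lo hi by simp
  have "0 \<le> kstep p n a D (Tseq p n a D t (Suc j)) (Suc j) \<and> kstep p n a D (Tseq p n a D t (Suc j)) (Suc j) < int p"
    using someI_ex[OF ex2] unfolding kstep_def by blast
  then show ?case using e' lo hi by blast
qed

lemma Tseq_compat:
  assumes p: "p > 0" and e: "ext p n a D t" and t: "0 \<le> t" "t < int p ^ D" and jj: "j \<le> j'"
  shows "Tseq p n a D t j' mod int p ^ (D + j) = Tseq p n a D t j"
  using jj
proof (induct j' rule: dec_induct)
  case base then show ?case using Tseq_inv[OF p e t, of j] by simp
next
  case (step j')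
  have "int p ^ (D + j) dvd int p ^ (D + j')" using step(1) by (intro le_imp_power_dvd) simp
  then have "(Tseq p n a D t j' + int p ^ (D + j') * kstep p n a D (Tseq p n a D t j') j') mod int p ^ (D + j)
      = Tseq p n a D t j' mod int p ^ (D + j)" by (metis dvd_mult2 mod_mult_self2 dvd_def mult.commute)
  then show ?case using step(3) by simp
qed

lemma koenig:
  assumes p: "p > 0" and e: "ext p n a D t" and t: "0 \<le> t" "t < int p ^ D"
  shows "\<exists>x. is_zp_root p n a x \<and> zp_trunc p x D = t"
proof -
  define U where "U = (\<lambda>m. Tseq p n a D t m mod int p ^ m)"
  have U1: "0 \<le> U m \<and> U m < int p ^ m" for m using p by (simp add: U_def)
  have UC: "U m' mod int p ^ m = U m" if "m \<le> m'" for m m'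
  proof -
    have d1: "int p ^ m dvd int p ^ m'" using that by (intro le_imp_power_dvd)
    have d2: "int p ^ m dvd int p ^ (D + m)" by (intro le_imp_power_dvd) simp
    have "U m' mod int p ^ m = Tseq p n a D t m' mod int p ^ m" unfolding U_def by (rule mod_mod_cancel[OF d1])
    also have "\<dots> = (Tseq p n a D t m' mod int p ^ (D + m)) mod int p ^ m" by (rule mod_mod_cancel[OF d2, symmetric])
    also have "\<dots> = Tseq p n a D t m mod int p ^ m" using Tseq_compat[OF p e t that] by simp
    finally show ?thesis by (simp add: U_def)
  qed
  define x where "x = (\<lambda>i. nat ((U (Suc i) div int p ^ i) mod int p))"
  have xt: "zp_trunc p x m = U m" for m unfolding x_def by (rule digits_of_seq(1)[OF p U1 UC])
  have xd: "\<forall>i. x i < p" unfolding x_def using digits_of_seq(2)[OF p U1 UC] by blast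
  have "int p ^ m dvd poly (fK p n a m) (zp_trunc p x m)" for m
  proof -
    have inv: "ext p n a (D + m) (Tseq p n a D t m)" "0 \<le> Tseq p n a D t m" "Tseq p n a D t m < int p ^ (D + m)"
      using Tseq_inv[OF p e t, of m] by auto
    then obtain t' where t': "ar p n a (D + m) t'" "t' mod int p ^ (D + m) = Tseq p n a D t m"
      unfolding ext_def by blast
    have "t' = Tseq p n a D t m" using t' by (simp add: ar_def)
    with t' have "ar p n a (D + m) (Tseq p n a D t m)" by simp
    from ar_down[OF this _ p, of m] have "ar p n a m (U m)" by (simp add: U_def)
    then show ?thesis by (simp add: ar_def xt)
  qed
  then have "is_zp_root p n a x" using xd by (simp add: is_zp_root_fK)
  moreover have "zp_trunc p x D = t" using xt[of D] Tseq_compat[OF p e t, of 0 D] by (simp add: U_def)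
  ultimately show ?thesis by blast
qed

definition atl :: "nat \<Rightarrow> nat \<Rightarrow> (nat \<Rightarrow> nat \<Rightarrow> nat) \<Rightarrow> nat \<Rightarrow> bool" where
  "atl p n a s \<longleftrightarrow> (\<exists>X. X \<subseteq> {x. is_zp_root p n a x} \<and> finite X \<and> card X = s)"

lemma atl_iff:
  assumes p: "p > 0"
  shows "atl p n a s \<longleftrightarrow> (\<exists>D. \<exists>T\<in>Pow {0..<int p ^ D}. card T = s \<and> (\<forall>t\<in>T. ext p n a D t))"
proof
  assume "atl p n a s"
  then obtain X where X: "X \<subseteq> {x. is_zp_root p n a x}" "finite X" "card X = s" by (auto simp: atl_def)
  obtain D where D: "\<forall>x\<in>X. \<forall>y\<in>X. x \<noteq> y \<longrightarrow> (\<exists>i<D. x i \<noteq> y i)" using exists_sep_level[OF X(2)] by blast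
  have dig: "\<forall>i. x i < p" if "x \<in> X" for x using X(1) that by (auto simp: is_zp_root_def)
  have inj: "inj_on (\<lambda>x. zp_trunc p x D) X"
  proof (rule inj_onI, rule ccontr)
    fix x y assume xy: "x \<in> X" "y \<in> X" "zp_trunc p x D = zp_trunc p y D" "x \<noteq> y"
    then obtain i where i: "i < D" "x i \<noteq> y i" using D by blast
    have "int (x i) = int (y i)" using zp_trunc_digit[of D x p i] zp_trunc_digit[of D y p i] dig xy i by simp
    then show False using i by simp
  qed
  let ?T = "(\<lambda>x. zp_trunc p x D) ` X"
  have "?T \<in> Pow {0..<int p ^ D}" using dig zp_trunc_nonneg zp_trunc_less by fastforce
  moreover have "card ?T = s" using card_image[OF inj] X by simp
  moreover have "\<forall>t\<in>?T. ext p n a D t" using root_ext X(1) by blast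
  ultimately show "\<exists>D. \<exists>T\<in>Pow {0..<int p ^ D}. card T = s \<and> (\<forall>t\<in>T. ext p n a D t)" by blast
next
  assume "\<exists>D. \<exists>T\<in>Pow {0..<int p ^ D}. card T = s \<and> (\<forall>t\<in>T. ext p n a D t)"
  then obtain D T where T: "T \<subseteq> {0..<int p ^ D}" "card T = s" "\<forall>t\<in>T. ext p n a D t" by blast
  define xt where "xt = (\<lambda>t. SOME x. is_zp_root p n a x \<and> zp_trunc p x D = t)"
  have xt: "is_zp_root p n a (xt t) \<and> zp_trunc p (xt t) D = t" if "t \<in> T" for t
  proof -
    have ex: "\<exists>x. is_zp_root p n a x \<and> zp_trunc p x D = t" using koenig[OF p, of n a D t] T that by auto
    then show ?thesis unfolding xt_def by (rule someI_ex)
  qed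
  have inj: "inj_on xt T" by (rule inj_onI) (metis xt)
  have fT: "finite T" using T(1) finite_subset by blast
  show "atl p n a s" unfolding atl_def
    by (rule exI[of _ "xt ` T"]) (use xt card_image[OF inj] T fT in auto)
qed

lemma pred_atl: "p > 0 \<Longrightarrow> Measurable.pred (coeff_measure p n) (\<lambda>a. atl p n a s)"
  unfolding atl_iff
  by (intro pred_intros_countable pred_intros_finite(4) pred_intros_conj1' pred_intros_finite(3) pred_ext) (auto intro: finite_subset)

lemma num_roots_char:
  "num_roots p n a = r \<longleftrightarrow> (if r = 0 then \<not> atl p n a 1 \<or> (\<forall>s. atl p n a s) else atl p n a r \<and> \<not> atl p n a (Suc r))"
proof -
  let ?R = "{x. is_zp_root p n a x}"
  have big: "atl p n a s" if "infinite ?R" for s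
    using infinite_arbitrarily_large[OF that, of s] by (auto simp: atl_def)
  have small: "\<not> atl p n a s" if "finite ?R" "card ?R < s" for s
  proof
    assume "atl p n a s"
    then obtain X where X: "X \<subseteq> ?R" "card X = s" by (auto simp: atl_def)
    have "card X \<le> card ?R" using card_mono[OF that(1) X(1)] .
    then show False using X that by simp
  qed
  have has: "atl p n a s" if "finite ?R" "s \<le> card ?R" for s
    using obtain_subset_with_card_n[OF that(2)] that(1) by (auto simp: atl_def intro: finite_subset)
  show ?thesis
  proof (cases "finite ?R")
    case True
    have iff: "atl p n a s \<longleftrightarrow> s \<le> card ?R" for s using small[OF True, of s] has[OF True, of s] by linarith
    have "\<not> atl p n a (Suc (card ?R))" using iff[of "Suc (card ?R)"] by simp
    then have nall: "\<not> (\<forall>s. atl p n a s)" by blast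
    show ?thesis
    proof (cases "r = 0")
      case True
      then show ?thesis using nall iff[of 1] unfolding num_roots_def by auto
    next
      case False
      then show ?thesis using iff[of r] iff[of "Suc r"] by (auto simp: num_roots_def)
    qed
  next
    case False
    then show ?thesis using big by (auto simp: num_roots_def)
  qed
qed

lemma num_roots_sets: "p > 0 \<Longrightarrow> {a \<in> space (coeff_measure p n). num_roots p n a = r} \<in> sets (coeff_measure p n)"
proof -
  assume p: "p > 0"
  have "Measurable.pred (coeff_measure p n) (\<lambda>a. num_roots p n a = r)"
    unfolding num_roots_char
    by (cases "r = 0") (simp_all add: pred_intros_logic pred_intros_countable pred_atl[OF p])
  then show ?thesis by (simp add: pred_def)
qed

lemma sum_kj: "(\<Sum>j<k. k - j) = (k choose 2) + (k::nat)"
proof (induct k)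
  case 0 then show ?case by simp
next
  case (Suc k)
  have "(\<Sum>j<Suc k. Suc k - j) = (\<Sum>j<k. Suc k - j) + 1" by simp
  also have "(\<Sum>j<k. Suc k - j) = (\<Sum>j<k. (k - j) + 1)" by (intro sum.cong refl) auto
  also have "\<dots> = (\<Sum>j<k. k - j) + k" by (simp only: sum.distrib) simp
  also have "Suc k choose 2 = k + (k choose 2)" by (simp add: numeral_2_eq_2)
  ultimately show ?case using Suc by simp
qed

lemma scale_identity:
  assumes "p > 0"
  shows "real p ^ (k choose 2) * (c * (1 / real p) ^ (\<Sum>j<k. k - j)) = c / real p ^ k"
  using assms by (simp add: sum_kj power_add field_simps power_one_over)

lemma Ev_low_sub:
  assumes pp: "prime p" and n1: "n \<ge> 1" and rn: "r \<le> n" and rn2: "r = n \<or> r + 2 \<le> n" and kdef: "k = min (r + 1) n"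
    and a: "a \<in> Ev n k (Slow p n r k)" and gd: "good p n a"
  shows "num_roots p n a = r"
proof -
  obtain c where c: "c \<in> Slow p n r k" and ac: "a \<in> (\<Pi>\<^sub>E j\<in>{..<n}. (if j < k then Wset k j (c j) else UNIV))"
    using a by (auto simp: Ev_def)
  obtain \<gamma> B where g: "\<gamma> \<in> (if r = n then {1} else {1..<int p})" and B: "B \<subseteq> {0..<int p}" "card B = r"
    and ceq: "c = ctup p k (smult \<gamma> (\<Prod>b\<in>B. [:-b,1:]))" using c by (auto simp: Slow_def)
  have kn: "k \<le> n" using kdef by simp
  have W: "a j \<in> Wset k j (c j)" if "j < k" for j
  proof -
    have "j \<in> {..<n}" using that kn by simp
    from PiE_mem[OF ac this] show ?thesis using that by simp
  qed
  have zz: "zc k a" unfolding zc_def using W by (auto simp: Wset_def)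
  have p0: "p > 0" using pp prime_gt_0_nat by blast
  have cc: "\<forall>j<k. int (a j (k - j)) = coeff (smult \<gamma> (\<Prod>b\<in>B. [:-b,1:])) j mod int p"
  proof (intro allI impI)
    fix j assume j: "j < k"
    have "a j (k - j) = c j" using W[OF j] by (simp add: Wset_def)
    also have "\<dots> = nat (coeff (smult \<gamma> (\<Prod>b\<in>B. [:-b,1:])) j mod int p)" using j by (simp add: ceq ctup_def)
    finally show "int (a j (k - j)) = coeff (smult \<gamma> (\<Prod>b\<in>B. [:-b,1:])) j mod int p" using p0 by simp
  qed
  have gu: "\<not> int p dvd \<gamma>" "r = n \<Longrightarrow> \<gamma> = 1"
    using g pp prime_gt_1_nat[OF pp] by (auto split: if_splits simp: zdvd_not_zless)
  show ?thesis by (rule num_roots_low[OF pp n1 rn rn2 kdef gd zz gu B cc])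
qed

lemma Ev_up_sup:
  assumes pp: "prime p" and n1: "n \<ge> 1" and rn: "r \<le> n" and rn2: "r = n \<or> r + 2 \<le> n" and kdef: "k = min (r + 1) n"
    and r1: "r \<ge> 1" and a: "a \<in> space (coeff_measure p n)" and gd: "good p n a" and nr: "num_roots p n a = r"
  shows "a \<in> Ev n k (Sup p n r k)"
proof -
  let ?R = "{x. is_zp_root p n a x}"
  have fin: "finite ?R"
  proof (rule ccontr)
    assume "infinite ?R"
    then have "card ?R = 0" by simp
    then show False using nr r1 by (simp add: num_roots_def)
  qed
  obtain xs where xs: "set xs = ?R" "distinct xs" using finite_distinct_list[OF fin] by blast
  have xsl: "length xs = r" using xs nr by (metis distinct_card num_roots_def)
  have xsr: "\<forall>x\<in>set xs. is_zp_root p n a x" using xs by simp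
  obtain \<gamma> \<beta>s where zz: "zc k a" and g: "\<gamma> \<in> (if r = n then {1} else {0..<int p})" and lb: "length \<beta>s = r"
    and sb: "set \<beta>s \<subseteq> {0..<int p}" and cc: "\<forall>j<k. int (a j (k - j)) = coeff (smult \<gamma> (\<Prod>b\<leftarrow>\<beta>s. [:-b,1:])) j mod int p"
    using upper_struct[OF pp n1 rn rn2 kdef gd r1 xs(2) xsl xsr] by blast
  define c where "c = ctup p k (smult \<gamma> (\<Prod>b\<leftarrow>\<beta>s. [:-b,1:]))"
  have cS: "c \<in> Sup p n r k" unfolding Sup_def c_def using g lb sb by (auto intro!: image_eqI[where x="(\<gamma>, \<beta>s)"])
  have p0: "p > 0" using pp prime_gt_0_nat by blast
  have "a j \<in> Wset k j (c j)" if j: "j < k" for j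
  proof -
    have "c j = nat (coeff (smult \<gamma> (\<Prod>b\<leftarrow>\<beta>s. [:-b,1:])) j mod int p)" using j by (simp add: c_def ctup_def)
    also have "\<dots> = a j (k - j)" using cc j by (metis nat_int)
    finally show ?thesis using zz j unfolding zc_def Wset_def by auto
  qed
  then have "a \<in> (\<Pi>\<^sub>E j\<in>{..<n}. (if j < k then Wset k j (c j) else UNIV))"
    using a by (auto simp: Mc_space PiE_iff)
  then show ?thesis using cS by (auto simp: Ev_def)
qed

lemma bounds_main:
  assumes pp: "prime p" and n1: "n \<ge> 1" and rn: "r \<le> n" and rn2: "r = n \<or> r + 2 \<le> n" and kdef: "k = min (r + 1) n"
  shows "real (card (Slow p n r k)) / real p ^ k \<le> real p ^ (k choose 2) * beta_star n r p"
    and "r \<ge> 1 \<Longrightarrow> real p ^ (k choose 2) * beta_star n r p \<le> real (card (Sup p n r k)) / real p ^ k"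
    and "beta_star n r p \<le> 1"
proof -
  let ?M = "coeff_measure p n"
  let ?T = "{a \<in> space ?M. num_roots p n a = r}"
  interpret F: prob_space ?M by (rule Mc_prob)
  have p0: "p > 0" using pp prime_gt_0_nat by blast
  have kn: "k \<le> n" using kdef by simp
  have Tsets: "?T \<in> sets ?M" by (rule num_roots_sets[OF p0])
  have AEg: "AE a in ?M. good p n a" by (rule AE_good[OF p0])
  have beta: "beta_star n r p = measure ?M ?T" by (simp add: beta_star_def)
  have Evspace: "Ev n k S \<subseteq> space ?M" for S by (auto simp: Ev_def Mc_space PiE_iff)
  have pk: "real p ^ (k choose 2) \<ge> 0" by simp
  have "AE a in ?M. a \<in> Ev n k (Slow p n r k) \<longrightarrow> a \<in> ?T"
    using AEg
  proof (rule AE_mp, intro AE_I2 impI)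
    fix a assume "good p n a" "a \<in> Ev n k (Slow p n r k)"
    then show "a \<in> ?T" using Ev_low_sub[OF pp n1 rn rn2 kdef] Evspace by blast
  qed
  then have "emeasure ?M (Ev n k (Slow p n r k)) \<le> emeasure ?M ?T" by (rule emeasure_mono_AE[OF _ Tsets])
  then have lo: "measure ?M (Ev n k (Slow p n r k)) \<le> measure ?M ?T"
    by (simp add: F.emeasure_eq_measure)
  have "measure ?M (Ev n k (Slow p n r k)) = real (card (Slow p n r k)) * (1 / real p) ^ (\<Sum>j<k. k - j)"
    by (rule Ev_measure[OF p0 Slow_sub[OF p0] kn])
  with lo have "real p ^ (k choose 2) * (real (card (Slow p n r k)) * (1 / real p) ^ (\<Sum>j<k. k - j)) \<le> real p ^ (k choose 2) * beta_star n r p"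
    using beta by (intro mult_left_mono) auto
  then show "real (card (Slow p n r k)) / real p ^ k \<le> real p ^ (k choose 2) * beta_star n r p"
    using scale_identity[OF p0] by simp
  show "real p ^ (k choose 2) * beta_star n r p \<le> real (card (Sup p n r k)) / real p ^ k" if r1: "r \<ge> 1"
  proof -
    have "AE a in ?M. a \<in> ?T \<longrightarrow> a \<in> Ev n k (Sup p n r k)"
      using AEg
    proof (rule AE_mp, intro AE_I2 impI)
      fix a assume "good p n a" "a \<in> ?T"
      then show "a \<in> Ev n k (Sup p n r k)" using Ev_up_sup[OF pp n1 rn rn2 kdef r1] by blast
    qed
    moreover have fS: "finite (Sup p n r k)" using finite_subset[OF Sup_sub[OF p0] finite_PiE_k] .
    ultimately have "emeasure ?M ?T \<le> emeasure ?M (Ev n k (Sup p n r k))" by (intro emeasure_mono_AE Ev_sets)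
    then have up: "measure ?M ?T \<le> measure ?M (Ev n k (Sup p n r k))"
      by (simp add: F.emeasure_eq_measure)
    have "measure ?M (Ev n k (Sup p n r k)) = real (card (Sup p n r k)) * (1 / real p) ^ (\<Sum>j<k. k - j)"
      by (rule Ev_measure[OF p0 Sup_sub[OF p0] kn])
    with up have "real p ^ (k choose 2) * beta_star n r p \<le> real p ^ (k choose 2) * (real (card (Sup p n r k)) * (1 / real p) ^ (\<Sum>j<k. k - j))"
      using beta by (intro mult_left_mono) auto
    then show ?thesis using scale_identity[OF p0] by simp
  qed
  show "beta_star n r p \<le> 1" using beta F.prob_le_1 by simp
qed

lemma lim_up_core: "(\<lambda>p. real ((p choose r) + (p ^ r - \<Prod>{p - r + 1..p})) / real p ^ r) \<longlonglongrightarrow> 1 / fact r"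
proof -
  have "(\<lambda>p. real (p choose r) / real p ^ r + (1 - real (\<Prod>{p - r + 1..p}) / real p ^ r)) \<longlonglongrightarrow> 1 / fact r + (1 - 1)"
    by (intro tendsto_add tendsto_diff lim_binom lim_ffp tendsto_const)
  moreover have "\<forall>\<^sub>F p in sequentially. real (p choose r) / real p ^ r + (1 - real (\<Prod>{p - r + 1..p}) / real p ^ r)
      = real ((p choose r) + (p ^ r - \<Prod>{p - r + 1..p})) / real p ^ r"
    using eventually_ge_at_top[of "Suc r"]
  proof eventually_elim
    case (elim p)
    then have rp: "r \<le> p" and p0: "p > 0" by auto
    have le: "\<Prod>{p - r + 1..p} \<le> p ^ r" by (rule ffp_bounds(2)[OF rp])
    have "real ((p choose r) + (p ^ r - \<Prod>{p - r + 1..p})) = real (p choose r) + real p ^ r - real (\<Prod>{p - r + 1..p})"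
      using le by (simp add: of_nat_diff)
    then show ?case using p0 by (simp add: field_simps)
  qed
  ultimately show ?thesis by (simp add: Lim_transform_eventually)
qed

lemma lim_pm1: "(\<lambda>p. real (p - 1) / real p) \<longlonglongrightarrow> 1"
proof -
  have "(\<lambda>p. 1 - 1 / real p) \<longlonglongrightarrow> 1 - 0"
    by (intro tendsto_diff tendsto_const tendsto_divide_0[OF tendsto_const] filterlim_at_top_imp_at_infinity[OF filterlim_real_sequentially])
  moreover have "\<forall>\<^sub>F p in sequentially. 1 - 1 / real p = real (p - 1) / real p"
    using eventually_ge_at_top[of 1] by eventually_elim (simp add: of_nat_diff field_simps)
  ultimately show ?thesis by (simp add: Lim_transform_eventually)
qed

lemma lim_low_gen:
  assumes "r \<le> n" "r = n \<or> r + 2 \<le> n" "k = min (r + 1) n"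
  shows "(\<lambda>p. real ((if r = n then 1 else p - 1) * (p choose r)) / real p ^ k) \<longlonglongrightarrow> 1 / fact r"
proof (cases "r = n")
  case True
  then have "k = r" using assms by simp
  then show ?thesis using True lim_binom by simp
next
  case False
  then have k: "k = r + 1" using assms by auto
  have "(\<lambda>p. (real (p - 1) / real p) * (real (p choose r) / real p ^ r)) \<longlonglongrightarrow> 1 * (1 / fact r)"
    by (intro tendsto_mult lim_pm1 lim_binom)
  moreover have "\<forall>\<^sub>F p in sequentially. (real (p - 1) / real p) * (real (p choose r) / real p ^ r) = real ((if r = n then 1 else p - 1) * (p choose r)) / real p ^ k"
    using eventually_ge_at_top[of 1] by eventually_elim (use False k in simp)
  ultimately show ?thesis by (simp add: Lim_transform_eventually)
qed

lemma lim_up_gen: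
  assumes "r \<le> n" "r = n \<or> r + 2 \<le> n" "k = min (r + 1) n"
  shows "(\<lambda>p. real ((if r = n then 1 else p) * ((p choose r) + (p ^ r - \<Prod>{p - r + 1..p}))) / real p ^ k) \<longlonglongrightarrow> 1 / fact r"
proof (cases "r = n")
  case True
  then have "k = r" using assms by simp
  then show ?thesis using True lim_up_core by simp
next
  case False
  then have k: "k = r + 1" using assms by auto
  have "\<forall>\<^sub>F p in sequentially. real ((p choose r) + (p ^ r - \<Prod>{p - r + 1..p})) / real p ^ r
     = real ((if r = n then 1 else p) * ((p choose r) + (p ^ r - \<Prod>{p - r + 1..p}))) / real p ^ k"
    using eventually_ge_at_top[of 1] by eventually_elim (use False k in simp)
  from lim_up_core[of r] this show ?thesis by (rule Lim_transform_eventually)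
qed

theorem proposition1p2:
  fixes n r :: nat
  assumes "r \<le> n" and "int r \<noteq> int n - 1"
  shows "filterlim (\<lambda>p. real p ^ (min (r + 1) n choose 2) * beta_star n r p)
           (nhds (1 / fact r)) (inf at_top (principal {p. prime p}))"
proof -
  let ?F = "inf at_top (principal {p::nat. prime p})"
  have Fle: "?F \<le> sequentially" by simp
  have evF: "\<forall>\<^sub>F p in ?F. prime p \<and> Suc r \<le> p"
    unfolding eventually_inf_principal using eventually_ge_at_top[of "Suc r"] by eventually_elim simp
  show ?thesis
  proof (cases "n = 0")
    case True
    then have r0: "r = 0" using assms by simp
    have "\<forall>\<^sub>F p in ?F. real p ^ (min (r + 1) n choose 2) * beta_star n r p = 1"
      using evF
    proof eventually_elim
      case (elim p)
      then have p1: "p > 1" using prime_gt_1_nat by blast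
      interpret F: prob_space "coeff_measure p n" by (rule Mc_prob)
      have "num_roots p 0 a = 0" for a
      proof -
        have "\<not> is_zp_root p 0 a x" for x
        proof
          assume "is_zp_root p 0 a x"
          then have "int p ^ 1 dvd 1" unfolding is_zp_root_def by (metis lessThan_0 power_0 sum.empty add_0)
          then show False using p1 by simp
        qed
        then show ?thesis by (simp add: num_roots_def)
      qed
      then have "beta_star n r p = measure (coeff_measure p n) (space (coeff_measure p n))"
        using True r0 by (simp add: beta_star_def)
      then show ?case using True r0 F.prob_space by (simp add: numeral_2_eq_2)
    qed
    then show ?thesis using r0 by (simp add: tendsto_eventually)
  next
    case False
    then have n1: "n \<ge> 1" by simp
    have rn2: "r = n \<or> r + 2 \<le> n" using assms by auto
    define k where "k = min (r + 1) n"
    let ?f = "\<lambda>p. real p ^ (k choose 2) * beta_star n r p"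
    let ?l = "\<lambda>p. real ((if r = n then 1 else p - 1) * (p choose r)) / real p ^ k"
    let ?u = "\<lambda>p. if r = 0 then 1 else real ((if r = n then 1 else p) * ((p choose r) + (p ^ r - \<Prod>{p - r + 1..p}))) / real p ^ k"
    have lo: "\<forall>\<^sub>F p in ?F. ?l p \<le> ?f p"
      using evF
    proof eventually_elim
      case (elim p)
      then have pp: "prime p" by simp
      have "card (Slow p n r k) = (if r = n then 1 else p - 1) * (p choose r)"
        by (rule card_Slow[OF pp assms(1) rn2 k_def])
      then show ?case using bounds_main(1)[OF pp n1 assms(1) rn2 k_def] by simp
    qed
    have up: "\<forall>\<^sub>F p in ?F. ?f p \<le> ?u p"
      using evF
    proof eventually_elim
      case (elim p)
      then have pp: "prime p" and rp: "r \<le> p" by auto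
      have p0: "p > 0" using pp prime_gt_0_nat by blast
      show ?case
      proof (cases "r = 0")
        case True
        then have "k = 1" using rn2 n1 k_def by auto
        then show ?thesis using True bounds_main(3)[OF pp n1 assms(1) rn2 k_def] by (simp add: numeral_2_eq_2)
      next
        case False
        have "real (card (Sup p n r k)) \<le> real ((if r = n then 1 else p) * ((p choose r) + (p ^ r - \<Prod>{p - r + 1..p})))"
          using card_Sup_le[OF pp assms(1) rn2 k_def rp] by (simp only: of_nat_le_iff)
        then have "real (card (Sup p n r k)) / real p ^ k \<le> real ((if r = n then 1 else p) * ((p choose r) + (p ^ r - \<Prod>{p - r + 1..p}))) / real p ^ k"
          by (rule divide_right_mono) simp
        then show ?thesis using False bounds_main(2)[OF pp n1 assms(1) rn2 k_def] by simp
      qed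
    qed
    have ll: "(?l \<longlongrightarrow> 1 / fact r) ?F"
      by (rule tendsto_mono[OF Fle lim_low_gen[OF assms(1) rn2 k_def]])
    have ul: "(?u \<longlongrightarrow> 1 / fact r) ?F"
    proof (cases "r = 0")
      case True then show ?thesis by simp
    next
      case False
      then show ?thesis using tendsto_mono[OF Fle lim_up_gen[OF assms(1) rn2 k_def]] by simp
    qed
    have "(?f \<longlongrightarrow> 1 / fact r) ?F" by (rule tendsto_sandwich[OF lo up ll ul])
    then show ?thesis by (simp add: k_def)
  qed
qed

end
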